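(* Let $\tau$ be a complex number with $\operatorname{Im}\tau>0$ and $q=e^{2\pi i\tau}$. Then $$\sum_{\substack{m=1\\ m\equiv1 \pmod 2}}^{\infty}\frac{q^{m}+q^{3m}}{1-q^{8m}}-\sum_{\substack{m=1\\ m\equiv1 \pmod 2}}^{\infty}\frac{q^{5m}+q^{7m}}{1-q^{8m}}=\frac{\eta^4(16\tau)}{\eta^2(8\tau)}\cdot\frac{\varphi(q^2)}{q\,\psi(q^8)}.$$
   Context: Notation: $(a;q)_\infty=\prod_{j\ge0}(1-aq^j)$; for real $a$, $q^a=e^{2\pi i a\tau}$. The Dedekind eta function is $\eta(\tau)=q^{1/24}(q;q)_\infty$, so $\eta(k\tau)=q^{k/24}(q^k;q^k)_\infty$. Ramanujan's theta functions: $\varphi(q)=\sum_{j=-\infty}^{\infty}q^{j^2}$ and $\psi(q)=\sum_{j=0}^{\infty}q^{j(j+1)/2}$. *)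

theory Defs
  imports "HOL-Analysis.Analysis"
begin

definition nome :: "complex \<Rightarrow> complex" where
  "nome \<tau> = exp (2 * pi * \<i> * \<tau>)"

definition qpoch_inf :: "complex \<Rightarrow> complex \<Rightarrow> complex" where
  "qpoch_inf a q = (\<Prod>j. (1 - a * q ^ j))"

definition dedekind_eta :: "complex \<Rightarrow> complex" where
  "dedekind_eta \<tau> = exp (2 * pi * \<i> * \<tau> / 24) * qpoch_inf (nome \<tau>) (nome \<tau>)"

definition ram_phi :: "complex \<Rightarrow> complex" where
  "ram_phi q = (\<Sum>\<^sub>\<infinity>j::int. q ^ nat (j\<^sup>2))"

definition ram_psi :: "complex \<Rightarrow> complex" where
  "ram_psi q = (\<Sum>j::nat. q ^ (j * (j + 1) div 2))"

end

theory Submission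
  imports Defs
begin

definition poch :: "complex \<Rightarrow> complex \<Rightarrow> nat \<Rightarrow> complex" where
  "poch a b n = (\<Prod>j<n. 1 - a * b ^ j)"

lemma poch_Suc: "poch a b (Suc n) = poch a b n * (1 - a * b ^ n)"
  by (simp add: poch_def)

lemma poch_0[simp]: "poch a b 0 = 1" by (simp add: poch_def)

lemma qp_conv:
  fixes a b :: complex
  assumes "norm b < 1"
  shows "convergent_prod (\<lambda>j. 1 - a * b ^ j)"
proof -
  have "summable (\<lambda>j. norm a * norm b ^ j)"
    using assms by (intro summable_mult summable_geometric) auto
  moreover have "(\<lambda>j. norm ((1 - a * b ^ j) - 1)) = (\<lambda>j. norm a * norm b ^ j)"
    by (simp add: fun_eq_iff norm_mult norm_power)
  ultimately have "summable (\<lambda>j. norm ((1 - a * b ^ j) - 1))" by simp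
  thus ?thesis
    by (intro abs_convergent_prod_imp_convergent_prod summable_imp_abs_convergent_prod)
qed

lemma qp_lim:
  assumes "norm b < 1"
  shows "(\<lambda>n. poch a b n) \<longlonglongrightarrow> qpoch_inf a b"
proof -
  have "(\<lambda>n. \<Prod>i\<le>n. 1 - a * b ^ i) \<longlonglongrightarrow> qpoch_inf a b"
    unfolding qpoch_inf_def using convergent_prod_LIMSEQ[OF qp_conv[OF assms]] .
  thus ?thesis unfolding poch_def using LIMSEQ_lessThan_iff_atMost by blast
qed

lemma qp_nz:
  assumes "norm b < 1" "\<And>j. a * b ^ j \<noteq> 1"
  shows "qpoch_inf a b \<noteq> 0"
  unfolding qpoch_inf_def using prodinf_nonzero[OF qp_conv[OF assms(1)]] assms(2) by auto

lemma qp_head: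
  assumes "norm b < 1"
  shows "qpoch_inf a b = (1 - a) * qpoch_inf (a * b) b"
proof -
  have e: "poch a b (Suc n) = (1 - a) * poch (a*b) b n" for n
    by (induction n) (auto simp: poch_def power_mult_distrib mult_ac)
  have "(\<lambda>n. poch a b (Suc n)) \<longlonglongrightarrow> qpoch_inf a b"
    using qp_lim[OF assms] by (rule LIMSEQ_Suc)
  moreover have "(\<lambda>n. poch a b (Suc n)) \<longlonglongrightarrow> (1 - a) * qpoch_inf (a * b) b"
    unfolding e by (intro tendsto_intros qp_lim assms)
  ultimately show ?thesis using LIMSEQ_unique by blast
qed

lemma qp_plusminus:
  assumes "norm b < 1"
  shows "qpoch_inf a b * qpoch_inf (-a) b = qpoch_inf (a^2) (b^2)"
proof -
  have e: "poch a b n * poch (-a) b n = poch (a^2) (b^2) n" for n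
    by (induction n) (auto simp: poch_def power_mult_distrib algebra_simps power2_eq_square power_mult)
  have nb: "norm (b^2) < 1" using assms by (simp add: norm_power power_less_one_iff)
  have "(\<lambda>n. poch a b n * poch (-a) b n) \<longlonglongrightarrow> qpoch_inf a b * qpoch_inf (-a) b"
    by (intro tendsto_intros qp_lim assms)
  moreover have "(\<lambda>n. poch a b n * poch (-a) b n) \<longlonglongrightarrow> qpoch_inf (a^2) (b^2)"
    unfolding e by (intro qp_lim nb)
  ultimately show ?thesis using LIMSEQ_unique by blast
qed

lemma qp_interleave:
  assumes "norm b < 1"
  shows "qpoch_inf a (b^2) * qpoch_inf (a*b) (b^2) = qpoch_inf a b"
proof -
  have e: "poch a (b^2) n * poch (a*b) (b^2) n = poch a b (2*n)" for n
    by (induction n) (auto simp: poch_def power_mult_distrib algebra_simps power2_eq_square power_mult)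
  have nb: "norm (b^2) < 1" using assms by (simp add: norm_power power_less_one_iff)
  have "(\<lambda>n. poch a (b^2) n * poch (a*b) (b^2) n) \<longlonglongrightarrow> qpoch_inf a (b^2) * qpoch_inf (a*b) (b^2)"
    by (intro tendsto_intros qp_lim nb)
  moreover have "(\<lambda>n. poch a b (2*n)) \<longlonglongrightarrow> qpoch_inf a b"
    using LIMSEQ_subseq_LIMSEQ[OF qp_lim[OF assms], of "\<lambda>n. 2*n"]
    by (auto simp: strict_mono_def o_def)
  ultimately show ?thesis unfolding e using LIMSEQ_unique by blast
qed

lemma poch_norm_bound:
  fixes a b :: complex
  assumes "norm b < 1"
  shows "norm (poch a b n) \<le> exp (norm a / (1 - norm b))"
proof -
  have "norm (poch a b n) = (\<Prod>j<n. norm (1 - a * b ^ j))"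
    by (simp add: poch_def prod_norm)
  also have "\<dots> \<le> (\<Prod>j<n. exp (norm a * norm b ^ j))"
  proof (rule prod_mono, safe)
    fix j
    have "norm (1 - a * b ^ j) \<le> 1 + norm a * norm b ^ j"
      using norm_triangle_ineq4[of 1 "a * b^j"] by (simp add: norm_mult norm_power)
    also have "\<dots> \<le> exp (norm a * norm b ^ j)" by (rule exp_ge_add_one_self[THEN order.trans]) simp
    finally show "norm (1 - a * b ^ j) \<le> exp (norm a * norm b ^ j)" .
  qed simp
  also have "\<dots> = exp (norm a * (\<Sum>j<n. norm b ^ j))"
    by (simp add: exp_sum sum_distrib_left)
  also have "\<dots> \<le> exp (norm a / (1 - norm b))"
  proof -
    have "(\<Sum>j<n. norm b ^ j) = (1 - norm b ^ n) / (1 - norm b)"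
      using assms by (subst sum_gp_strict) auto
    also have "\<dots> \<le> 1 / (1 - norm b)"
      using assms by (intro divide_right_mono) auto
    finally have "norm a * (\<Sum>j<n. norm b ^ j) \<le> norm a * (1 / (1 - norm b))"
      by (intro mult_left_mono) auto
    thus ?thesis by simp
  qed
  finally show ?thesis .
qed

lemma poch_inv_bound:
  fixes a b :: complex
  assumes "norm b < 1" "\<And>j. a * b ^ j \<noteq> 1"
  obtains K where "K > 0" "\<And>n. norm (inverse (poch a b n)) \<le> K"
proof -
  have "(\<lambda>n. inverse (poch a b n)) \<longlonglongrightarrow> inverse (qpoch_inf a b)"
    by (intro tendsto_inverse qp_lim assms qp_nz)
  hence "Bseq (\<lambda>n. inverse (poch a b n))"
    by (intro convergent_imp_Bseq) (auto simp: convergent_def)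
  thus ?thesis using that by (auto elim: BseqE)
qed

lemma tannery_seq:
  fixes A :: "nat \<Rightarrow> nat \<Rightarrow> complex"
  assumes "\<And>m. (\<lambda>n. A n m) \<longlonglongrightarrow> B m" "\<And>n m. norm (A n m) \<le> M m" "summable M"
  shows "summable B" "(\<lambda>n. suminf (A n)) \<longlonglongrightarrow> suminf B"
proof -
  have ev: "eventually (\<lambda>(k,n). norm (A n k) \<le> M k) (at_top \<times>\<^sub>F sequentially)"
    by (intro always_eventually) (auto simp: assms(2))
  from tannerys_theorem[of "\<lambda>k n. A n k" B sequentially M, OF assms(1) ev assms(3)]
  have "summable (\<lambda>n. norm (B n))" "(\<lambda>n. suminf (A n)) \<longlonglongrightarrow> suminf B" by auto
  thus "summable B" "(\<lambda>n. suminf (A n)) \<longlonglongrightarrow> suminf B" by (auto intro: summable_norm_cancel)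
qed

fun tri :: "nat \<Rightarrow> nat" where
  "tri 0 = 0" | "tri (Suc k) = tri k + k"

lemma tri_add: "tri (a + b) = tri a + tri b + a * b"
  by (induction b) auto

lemma tri2: "2 * tri k + k = k * k"
  by (induction k) auto

lemma summable_tri:
  fixes r s :: real
  assumes "0 \<le> r" "0 \<le> s" "s < 1"
  shows "summable (\<lambda>m. r ^ m * s ^ tri m)"
proof -
  have "(\<lambda>m. r * s ^ m) \<longlonglongrightarrow> r * 0"
    by (intro tendsto_intros LIMSEQ_power_zero) (use assms in auto)
  hence "eventually (\<lambda>m. r * s ^ m < 1/2) sequentially"
    by (intro order_tendstoD) auto
  then obtain N where N: "\<And>m. m \<ge> N \<Longrightarrow> r * s ^ m < 1/2"
    by (auto simp: eventually_sequentially)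
  show ?thesis
  proof (rule summable_ratio_test[of "1/2" N])
    fix m assume "m \<ge> N"
    have "norm (r ^ Suc m * s ^ tri (Suc m)) = (r * s ^ m) * (r ^ m * s ^ tri m)"
      using assms by (simp add: power_add algebra_simps)
    also have "\<dots> \<le> 1/2 * (r ^ m * s ^ tri m)"
      using N[OF \<open>m \<ge> N\<close>] assms by (intro mult_right_mono) auto
    finally show "norm (r ^ Suc m * s ^ tri (Suc m)) \<le> 1/2 * norm (r ^ m * s ^ tri m)"
      using assms by simp
  qed simp
qed

lemma poch_pp_nz:
  fixes p :: complex
  assumes "norm p < 1"
  shows "poch p p n \<noteq> 0"
proof -
  have "p * p ^ j \<noteq> 1" for j
  proof
    assume "p * p ^ j = 1"
    hence "norm (p ^ Suc j) = 1" by simp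
    moreover have "norm (p ^ Suc j) < 1"
      using assms by (simp add: norm_power power_less_one_iff del: power_Suc)
    ultimately show False by simp
  qed
  thus ?thesis by (auto simp: poch_def)
qed

lemma pp_ne1:
  fixes p :: complex
  assumes "norm p < 1"
  shows "p * p ^ j \<noteq> 1"
proof
  assume "p * p ^ j = 1"
  hence "norm (p ^ Suc j) = 1" by simp
  moreover have "norm (p ^ Suc j) < 1"
    using assms by (simp add: norm_power power_less_one_iff del: power_Suc)
  ultimately show False by simp
qed

definition qb :: "complex \<Rightarrow> nat \<Rightarrow> nat \<Rightarrow> complex" where
  "qb p N k = (if k \<le> N then poch p p N / (poch p p k * poch p p (N - k)) else 0)"

lemma qb_pascal:
  fixes p :: complex
  assumes "norm p < 1" "k \<le> N"
  shows "qb p (Suc N) (Suc k) = qb p N (Suc k) + p ^ (N - k) * qb p N k"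
proof (cases "k = N")
  case True
  thus ?thesis using poch_pp_nz[OF assms(1)] by (simp add: qb_def)
next
  case False
  hence "k < N" using assms(2) by simp
  then obtain m where N: "N = Suc (k + m)" using less_imp_Suc_add by blast
  have nz: "poch p p j \<noteq> 0" for j using poch_pp_nz[OF assms(1)] .
  have nz1: "1 - p * p ^ j \<noteq> 0" for j using pp_ne1[OF assms(1)] by auto
  have e1: "N - k = Suc m" "N - Suc k = m" using N by auto
  have le: "Suc k \<le> N" "k \<le> N" using N by auto
  define P where "P = poch p p"
  have PS: "P (Suc j) = P j * (1 - p * p ^ j)" for j unfolding P_def by (rule poch_Suc)
  have a1: "qb p (Suc N) (Suc k) = P (Suc N) / (P (Suc k) * P (Suc m))"
    unfolding qb_def P_def using le e1 by simp
  have a2: "qb p N (Suc k) = P N / (P (Suc k) * P m)"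
    unfolding qb_def P_def using le e1 by simp
  have a3: "qb p N k = P N / (P k * P (Suc m))"
    unfolding qb_def P_def using le e1 by simp
  define u where "u = 1 - p * p ^ k"
  define v where "v = 1 - p * p ^ m"
  define r where "r = p ^ (Suc m)"
  have u: "u \<noteq> 0" and v: "v \<noteq> 0" unfolding u_def v_def using nz1 by auto
  have key: "1 - p * p ^ N = v + r * u"
    unfolding u_def v_def r_def N by (simp add: power_add algebra_simps)
  have nzP: "P j \<noteq> 0" for j unfolding P_def by (rule nz)
  have "qb p (Suc N) (Suc k) = P N * (1 - p * p ^ N) / (P k * u * (P m * v))"
    unfolding a1 PS u_def v_def by simp
  also have "\<dots> = P N * (v + r * u) / (P k * u * (P m * v))" by (simp add: key)
  also have "\<dots> = P N / (P k * u * P m) + r * (P N / (P k * (P m * v)))"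
    using nzP u v by (simp add: field_simps)
  also have "\<dots> = qb p N (Suc k) + p ^ (N - k) * qb p N k"
    unfolding a2 a3 PS e1 u_def v_def r_def by simp
  finally show ?thesis .
qed

lemma qbin_thm:
  fixes p x :: complex
  assumes "norm p < 1"
  shows "(\<Prod>i<N. 1 + x * p ^ i) = (\<Sum>k\<le>N. qb p N k * p ^ tri k * x ^ k)"
proof (induction N)
  case 0
  then show ?case using poch_pp_nz[OF assms] by (simp add: qb_def)
next
  case (Suc N)
  define A where "A k = qb p N k * p ^ tri k * x ^ k" for k
  have "(\<Prod>i<Suc N. 1 + x * p ^ i) = (\<Sum>k\<le>N. A k) * (1 + x * p ^ N)"
    using Suc by (simp add: A_def)
  also have "\<dots> = (\<Sum>k\<le>N. A k) + (\<Sum>k\<le>N. A k * x * p ^ N)"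
  proof -
    have "(\<Sum>k\<le>N. A k * x * p ^ N) = (\<Sum>k\<le>N. A k) * x * p ^ N"
      by (simp add: sum_distrib_right)
    thus ?thesis by (simp add: algebra_simps)
  qed
  finally have L: "(\<Prod>i<Suc N. 1 + x * p ^ i) = (\<Sum>k\<le>N. A k) + (\<Sum>k\<le>N. A k * x * p ^ N)" .
  have R1: "(\<Sum>k\<le>Suc N. qb p (Suc N) k * p ^ tri k * x ^ k)
      = 1 + (\<Sum>k\<le>N. qb p (Suc N) (Suc k) * p ^ tri (Suc k) * x ^ Suc k)"
    using poch_pp_nz[OF assms] by (subst sum.atMost_Suc_shift) (simp add: qb_def)
  have R2: "(\<Sum>k\<le>N. qb p (Suc N) (Suc k) * p ^ tri (Suc k) * x ^ Suc k)
      = (\<Sum>k\<le>N. qb p N (Suc k) * p ^ tri (Suc k) * x ^ Suc k) + (\<Sum>k\<le>N. A k * x * p ^ N)"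
  proof -
    have "qb p (Suc N) (Suc k) * p ^ tri (Suc k) * x ^ Suc k
        = qb p N (Suc k) * p ^ tri (Suc k) * x ^ Suc k + A k * x * p ^ N" if "k \<le> N" for k
    proof -
      have e: "N - k + (tri k + k) = tri k + N" using that by simp
      have eq: "p ^ (N - k) * p ^ (tri k + k) = p ^ tri k * p ^ N"
        by (simp only: power_add[symmetric] e)
      have "p ^ (N - k) * qb p N k * p ^ tri (Suc k) * x ^ Suc k
          = qb p N k * (p ^ (N - k) * p ^ (tri k + k)) * (x ^ k * x)" by (simp add: ac_simps)
      also have "\<dots> = qb p N k * (p ^ tri k * p ^ N) * (x ^ k * x)" by (simp only: eq)
      also have "\<dots> = A k * x * p ^ N" by (simp add: A_def ac_simps)
      finally have "p ^ (N - k) * qb p N k * p ^ tri (Suc k) * x ^ Suc k = A k * x * p ^ N" .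
      thus ?thesis unfolding qb_pascal[OF assms that] by (simp add: distrib_right)
    qed
    thus ?thesis by (simp add: sum.distrib)
  qed
  have R3: "1 + (\<Sum>k\<le>N. qb p N (Suc k) * p ^ tri (Suc k) * x ^ Suc k) = (\<Sum>k\<le>Suc N. A k)"
    unfolding sum.atMost_Suc_shift[of A N] using poch_pp_nz[OF assms] by (simp add: A_def qb_def)
  have R4: "(\<Sum>k\<le>Suc N. A k) = (\<Sum>k\<le>N. A k)"
    by (simp add: A_def qb_def)
  have "(\<Sum>k\<le>Suc N. qb p (Suc N) k * p ^ tri k * x ^ k) = (1 + (\<Sum>k\<le>N. qb p N (Suc k) * p ^ tri (Suc k) * x ^ Suc k)) + (\<Sum>k\<le>N. A k * x * p ^ N)"
    unfolding R1 R2 by (simp add: add.assoc)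
  thus ?case unfolding R3 R4 L by simp
qed

lemma prod_split_add: "(\<Prod>i<m+n. f i) = (\<Prod>i<m. f i) * (\<Prod>i<n. f (m+i))"
  for f :: "nat \<Rightarrow> 'a::comm_monoid_mult"
  by (induction n) (auto simp: ac_simps)

lemma sum_split_add: "(\<Sum>i<m+n. f i) = (\<Sum>i<m. f i) + (\<Sum>i<n. f (m+i))"
  for f :: "nat \<Rightarrow> 'a::comm_monoid_add"
  by (induction n) (auto simp: ac_simps)

lemma sum_split2n: "(\<Sum>k\<le>2*n. g k) = (\<Sum>m\<le>n. g (n+m)) + (\<Sum>m<n. g (n - Suc m))"
  for g :: "nat \<Rightarrow> 'a::comm_monoid_add"
proof -
  have "(\<Sum>k\<le>2*n. g k) = (\<Sum>k<n + Suc n. g k)"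
    by (simp add: lessThan_Suc_atMost[symmetric] mult_2)
  also have "\<dots> = (\<Sum>k<n. g k) + (\<Sum>m<Suc n. g (n+m))" by (rule sum_split_add)
  also have "(\<Sum>k<n. g k) = (\<Sum>m<n. g (n - Suc m))" by (rule sum.nat_diff_reindex[symmetric])
  finally show ?thesis by (simp add: lessThan_Suc_atMost add.commute)
qed

lemma prod_split2n: "(\<Prod>k\<le>2*n. g k) = (\<Prod>m\<le>n. g (n+m)) * (\<Prod>m<n. g (n - Suc m))"
  for g :: "nat \<Rightarrow> 'a::comm_monoid_mult"
proof -
  have "(\<Prod>k\<le>2*n. g k) = (\<Prod>k<n + Suc n. g k)"
    by (simp add: lessThan_Suc_atMost[symmetric] mult_2)
  also have "\<dots> = (\<Prod>k<n. g k) * (\<Prod>m<Suc n. g (n+m))" by (rule prod_split_add)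
  also have "(\<Prod>k<n. g k) = (\<Prod>m<n. g (n - Suc m))" by (rule prod.nat_diff_reindex[symmetric])
  finally show ?thesis by (simp add: lessThan_Suc_atMost mult.commute)
qed

lemma prod_inv_pow: "(\<Prod>i<n. w / p ^ Suc i) = w ^ n / p ^ tri (Suc n)"
  for w p :: complex
  by (induction n) (auto simp: power_add field_simps)

lemma jtp_finite:
  fixes p w :: complex
  assumes p: "norm p < 1" "p \<noteq> 0" and w: "w \<noteq> 0"
  shows "poch (-w) p n * poch (-p/w) p n =
    (\<Sum>m\<le>n. qb p (2*n) (n+m) * w^m * p ^ tri m) +
    (\<Sum>m<n. qb p (2*n) (n - Suc m) * inverse w ^ Suc m * p ^ tri (Suc (Suc m)))"
proof -
  define x where "x = w / p ^ n"
  define g where "g k = qb p (2*n) k * p ^ tri k * x ^ k" for k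
  have Q: "(\<Prod>i<2*n. 1 + x * p ^ i) = (\<Sum>k\<le>2*n. g k)"
    unfolding g_def by (rule qbin_thm[OF p(1)])
  have "(\<Prod>i<2*n. 1 + x * p ^ i) = (\<Prod>i<n. 1 + x * p ^ i) * (\<Prod>i<n. 1 + x * p ^ (n+i))"
    using prod_split_add[of "\<lambda>i. 1 + x * p ^ i" n n] by (simp add: mult_2)
  also have "(\<Prod>i<n. 1 + x * p ^ (n+i)) = poch (-w) p n"
    unfolding poch_def x_def using p by (intro prod.cong) (auto simp: power_add)
  also have "(\<Prod>i<n. 1 + x * p ^ i) = (\<Prod>i<n. 1 + x * p ^ (n - Suc i))"
    by (rule prod.nat_diff_reindex[symmetric])
  also have "\<dots> = (\<Prod>i<n. (w / p ^ Suc i) * (1 - (-p/w) * p ^ i))"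
  proof (intro prod.cong refl)
    fix i assume "i \<in> {..<n}"
    hence "n - Suc i + Suc i = n" by simp
    hence "p ^ n = p ^ (n - Suc i) * p ^ Suc i" by (metis power_add)
    thus "1 + x * p ^ (n - Suc i) = (w / p ^ Suc i) * (1 - (-p/w) * p ^ i)"
      unfolding x_def using p w by (simp add: field_simps)
  qed
  also have "\<dots> = w ^ n / p ^ tri (Suc n) * poch (-p/w) p n"
    unfolding prod.distrib prod_inv_pow poch_def ..
  finally have L: "w ^ n / p ^ tri (Suc n) * poch (- p / w) p n * poch (- w) p n = (\<Sum>k\<le>2*n. g k)"
    using Q by simp
  define c where "c = p ^ tri (Suc n) / w ^ n"
  have c_nz: "p ^ tri (Suc n) \<noteq> 0" "w ^ n \<noteq> 0" using p w by auto
  have "poch (-w) p n * poch (-p/w) p n = c * (\<Sum>k\<le>2*n. g k)"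
    unfolding L[symmetric] c_def using c_nz by (simp add: field_simps)
  also have "\<dots> = (\<Sum>m\<le>n. c * g (n+m)) + (\<Sum>m<n. c * g (n - Suc m))"
    by (simp add: sum_split2n sum_distrib_left distrib_left)
  also have "(\<Sum>m\<le>n. c * g (n+m)) = (\<Sum>m\<le>n. qb p (2*n) (n+m) * w^m * p ^ tri m)"
  proof (intro sum.cong refl)
    fix m
    have e: "tri (n+m) + tri (Suc n) = tri m + n*(n+m)"
      using tri2[of n] by (simp add: tri_add algebra_simps)
    have e2: "p ^ tri (n+m) * p ^ tri (Suc n) = p ^ tri m * p ^ (n*(n+m))"
      by (simp only: power_add[symmetric] e)
    have e3: "x ^ (n+m) = w ^ n * w ^ m / p ^ (n*(n+m))"
      unfolding x_def by (simp add: power_divide power_mult[symmetric] power_add distrib_left)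
    show "c * g (n+m) = qb p (2*n) (n+m) * w^m * p ^ tri m"
      unfolding g_def c_def e3 using c_nz e2 p w
      by (simp add: field_simps; metis mult.commute mult.left_commute)
  qed
  also have "(\<Sum>m<n. c * g (n - Suc m)) = (\<Sum>m<n. qb p (2*n) (n - Suc m) * inverse w ^ Suc m * p ^ tri (Suc (Suc m)))"
  proof (intro sum.cong refl)
    fix m assume "m \<in> {..<n}"
    then obtain k where n: "n = Suc (k + m)" by (auto dest: less_imp_Suc_add simp: add.commute)
    have k: "n - Suc m = k" using n by simp
    have e: "tri k + tri (Suc n) = tri (Suc (Suc m)) + n*k"
      using tri2[of k] tri_add[of k "Suc (Suc m)"] unfolding n by (simp add: algebra_simps)
    have e2: "p ^ tri k * p ^ tri (Suc n) = p ^ tri (Suc (Suc m)) * p ^ (n*k)"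
      by (simp only: power_add[symmetric] e)
    have e3: "x ^ k = w ^ k / p ^ (n*k)"
      unfolding x_def by (simp add: power_divide power_mult[symmetric])
    have e4: "w ^ n = w ^ k * w ^ Suc m" unfolding n by (simp add: power_add[symmetric])
    show "c * g (n - Suc m) = qb p (2*n) (n - Suc m) * inverse w ^ Suc m * p ^ tri (Suc (Suc m))"
      unfolding g_def c_def k e3 e4 using c_nz e2 p w
      by (simp add: field_simps power_inverse; metis mult.commute mult.left_commute)
  qed
  finally show ?thesis .
qed

lemma qb_bound:
  fixes p :: complex
  assumes "norm p < 1"
  obtains B where "B > 0" "\<And>N k. norm (qb p N k) \<le> B"
proof -
  obtain K where K: "K > 0" "\<And>n. norm (inverse (poch p p n)) \<le> K"
    using poch_inv_bound[of p p] pp_ne1[OF assms] assms by blast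
  define U where "U = exp (norm p / (1 - norm p))"
  have U: "norm (poch p p n) \<le> U" for n unfolding U_def by (rule poch_norm_bound[OF assms])
  have "norm (qb p N k) \<le> U * K * K" for N k
  proof (cases "k \<le> N")
    case True
    have "norm (qb p N k) = norm (poch p p N) * norm (inverse (poch p p k)) * norm (inverse (poch p p (N - k)))"
      using True by (simp add: qb_def norm_mult norm_divide divide_inverse)
    also have "\<dots> \<le> U * K * K"
      using U K by (intro mult_mono) (auto simp: U_def intro: mult_nonneg_nonneg)
    finally show ?thesis .
  next
    case False
    thus ?thesis using K U[of 0] by (simp add: qb_def)
  qed
  moreover have "U * K * K > 0" using K by (simp add: U_def)
  ultimately show ?thesis using that by blast
qed

lemma lim_minus: "X \<longlonglongrightarrow> L \<Longrightarrow> (\<lambda>n. X (n - c)) \<longlonglongrightarrow> L"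
  by (rule filterlim_compose[OF _ filterlim_minus_const_nat_at_top])

lemma lim_plus: "X \<longlonglongrightarrow> L \<Longrightarrow> (\<lambda>n. X (n + c)) \<longlonglongrightarrow> L"
  by (rule LIMSEQ_ignore_initial_segment)

lemma lim_double: "X \<longlonglongrightarrow> L \<Longrightarrow> (\<lambda>n. X (2*n)) \<longlonglongrightarrow> L"
  using LIMSEQ_subseq_LIMSEQ[of X L "\<lambda>n. 2*n"] by (auto simp: strict_mono_def o_def)

lemma qb_lim1:
  fixes p :: complex
  assumes "norm p < 1"
  shows "(\<lambda>n. qb p (2*n) (n+m)) \<longlonglongrightarrow> 1 / qpoch_inf p p"
proof -
  define L where "L = qpoch_inf p p"
  have L: "L \<noteq> 0" unfolding L_def using qp_nz[OF assms] pp_ne1[OF assms] by blast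
  have PL: "(\<lambda>n. poch p p n) \<longlonglongrightarrow> L" unfolding L_def by (rule qp_lim[OF assms])
  have "(\<lambda>n. poch p p (2*n) / (poch p p (n+m) * poch p p (n - m))) \<longlonglongrightarrow> L / (L * L)"
    using L by (intro tendsto_intros lim_double lim_plus lim_minus PL) auto
  moreover have "eventually (\<lambda>n. poch p p (2*n) / (poch p p (n+m) * poch p p (n - m)) = qb p (2*n) (n+m)) sequentially"
    using eventually_ge_at_top[of m]
    by eventually_elim (auto simp: qb_def)
  ultimately have "(\<lambda>n. qb p (2*n) (n+m)) \<longlonglongrightarrow> L / (L * L)"
    by (rule Lim_transform_eventually)
  thus ?thesis using L by (simp add: L_def)
qed

lemma qb_lim2:
  fixes p :: complex
  assumes "norm p < 1"
  shows "(\<lambda>n. qb p (2*n) (n - Suc m)) \<longlonglongrightarrow> 1 / qpoch_inf p p"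
proof -
  define L where "L = qpoch_inf p p"
  have L: "L \<noteq> 0" unfolding L_def using qp_nz[OF assms] pp_ne1[OF assms] by blast
  have PL: "(\<lambda>n. poch p p n) \<longlonglongrightarrow> L" unfolding L_def by (rule qp_lim[OF assms])
  have "(\<lambda>n. poch p p (2*n) / (poch p p (n - Suc m) * poch p p (n + Suc m))) \<longlonglongrightarrow> L / (L * L)"
    using L by (intro tendsto_intros lim_double lim_plus lim_minus PL) auto
  moreover have "eventually (\<lambda>n. poch p p (2*n) / (poch p p (n - Suc m) * poch p p (n + Suc m)) = qb p (2*n) (n - Suc m)) sequentially"
    using eventually_ge_at_top[of "Suc m"]
    by eventually_elim (auto simp: qb_def)
  ultimately have "(\<lambda>n. qb p (2*n) (n - Suc m)) \<longlonglongrightarrow> L / (L * L)"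
    by (rule Lim_transform_eventually)
  thus ?thesis using L by (simp add: L_def)
qed

theorem jtp:
  fixes p w :: complex
  assumes p: "norm p < 1" "p \<noteq> 0" and w: "w \<noteq> 0"
  shows "(\<lambda>m. w ^ m * p ^ tri m + inverse w ^ Suc m * p ^ tri (Suc (Suc m))) sums
           (qpoch_inf p p * qpoch_inf (-w) p * qpoch_inf (-p/w) p)"
proof -
  define L where "L = qpoch_inf p p"
  have L: "L \<noteq> 0" unfolding L_def using qp_nz[OF p(1)] pp_ne1[OF p(1)] by blast
  define c1 where "c1 m = w ^ m * p ^ tri m" for m
  define c2 where "c2 m = inverse w ^ Suc m * p ^ tri (Suc (Suc m))" for m
  define JT where "JT n m = (if m \<le> n then qb p (2*n) (n+m) * c1 m else 0) +
                           (if m < n then qb p (2*n) (n - Suc m) * c2 m else 0)" for n m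
  define Bl where "Bl m = c1 m / L + c2 m / L" for m
  obtain B where B: "B > 0" "\<And>N k. norm (qb p N k) \<le> B" using qb_bound[OF p(1)] by blast
  define M where "M m = B * (norm w ^ m * norm p ^ tri m) + B * ((norm p / norm w) ^ Suc m * norm p ^ tri (Suc m))" for m
  have lim: "(\<lambda>n. JT n m) \<longlonglongrightarrow> Bl m" for m
  proof -
    have "(\<lambda>n. qb p (2*n) (n+m) * c1 m + qb p (2*n) (n - Suc m) * c2 m) \<longlonglongrightarrow> 1/L * c1 m + 1/L * c2 m"
      unfolding L_def by (intro tendsto_intros qb_lim1 qb_lim2 p)
    moreover have "eventually (\<lambda>n. qb p (2*n) (n+m) * c1 m + qb p (2*n) (n - Suc m) * c2 m = JT n m) sequentially"
      using eventually_ge_at_top[of "Suc m"] by eventually_elim (auto simp: JT_def)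
    ultimately show ?thesis unfolding Bl_def by (auto intro: Lim_transform_eventually)
  qed
  have c1b: "norm (c1 m) = norm w ^ m * norm p ^ tri m" for m
    by (simp add: c1_def norm_mult norm_power)
  have c2b: "norm (c2 m) = (norm p / norm w) ^ Suc m * norm p ^ tri (Suc m)" for m
  proof -
    have e: "tri (Suc (Suc m)) = tri (Suc m) + Suc m" by simp
    have "norm (c2 m) = inverse (norm w) ^ Suc m * norm p ^ (tri (Suc m) + Suc m)"
      by (simp only: c2_def norm_mult norm_power norm_inverse e)
    also have "\<dots> = (norm p / norm w) ^ Suc m * norm p ^ tri (Suc m)"
      using w by (simp add: power_add power_divide field_simps del: tri.simps)
    finally show ?thesis .
  qed
  have bound: "norm (JT n m) \<le> M m" for n m
  proof -
    have "norm (JT n m) \<le> norm (if m \<le> n then qb p (2*n) (n+m) * c1 m else 0) +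
                          norm (if m < n then qb p (2*n) (n - Suc m) * c2 m else 0)"
      unfolding JT_def by (rule norm_triangle_ineq)
    also have "\<dots> \<le> B * norm (c1 m) + B * norm (c2 m)"
      using B by (intro add_mono) (auto simp: norm_mult intro: mult_right_mono)
    finally show ?thesis unfolding M_def c1b c2b .
  qed
  have sM: "summable M"
  proof -
    have s1: "summable (\<lambda>m. norm w ^ m * norm p ^ tri m)"
      using p by (intro summable_tri) auto
    have "summable (\<lambda>m. (norm p / norm w) ^ m * norm p ^ tri m)"
      using p by (intro summable_tri) auto
    hence s2: "summable (\<lambda>m. (norm p / norm w) ^ Suc m * norm p ^ tri (Suc m))"
      by (subst summable_Suc_iff)
    show ?thesis unfolding M_def by (intro summable_add summable_mult s1 s2)
  qed
  note T = tannery_seq[of JT Bl M, OF lim bound sM]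
  have fin: "suminf (JT n) = poch (-w) p n * poch (-p/w) p n" for n
  proof -
    have "suminf (JT n) = (\<Sum>m\<le>n. JT n m)"
      by (rule suminf_finite) (auto simp: JT_def)
    also have "\<dots> = (\<Sum>m\<le>n. qb p (2*n) (n+m) * c1 m) + (\<Sum>m\<le>n. if m < n then qb p (2*n) (n - Suc m) * c2 m else 0)"
      unfolding JT_def by (simp add: sum.distrib)
    also have "(\<Sum>m\<le>n. if m < n then qb p (2*n) (n - Suc m) * c2 m else 0) = (\<Sum>m<n. qb p (2*n) (n - Suc m) * c2 m)"
      unfolding lessThan_Suc_atMost[symmetric] by simp
    finally show ?thesis
      using jtp_finite[OF p w, of n] by (simp add: c1_def c2_def mult.assoc)
  qed
  have "(\<lambda>n. poch (-w) p n * poch (-p/w) p n) \<longlonglongrightarrow> qpoch_inf (-w) p * qpoch_inf (-p/w) p"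
    by (intro tendsto_intros qp_lim p)
  with T(2) have "suminf Bl = qpoch_inf (-w) p * qpoch_inf (-p/w) p"
    unfolding fin using LIMSEQ_unique by blast
  moreover have "(\<lambda>m. L * Bl m) sums (L * suminf Bl)"
    using T(1) by (intro sums_mult summable_sums)
  moreover have "L * Bl m = c1 m + c2 m" for m using L by (simp add: Bl_def field_simps)
  ultimately show ?thesis unfolding L_def c1_def c2_def by (simp add: mult.assoc)
qed

lemma aux_pf:
  fixes A E t u \<alpha> \<beta> :: complex
  assumes "t \<noteq> 0"
  shows "(\<beta> + (1 - \<beta>) * A / t) * u - (1 - \<beta>) * E * (\<alpha> / t) = \<beta> * u + (1 - \<beta>) * ((A * u - \<alpha> * E) / t)"
  using assms by (simp add: field_simps)

lemma lagrange_ex: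
  fixes a b :: "'i \<Rightarrow> complex"
  assumes "finite K" "inj_on a K" "\<And>k. k \<in> K \<Longrightarrow> a k \<noteq> 0"
  shows "\<exists>d. \<forall>y. (\<Prod>k\<in>K. 1 - b k * y) = (\<Prod>k\<in>K. b k / a k) * (\<Prod>k\<in>K. 1 - a k * y)
               + (\<Sum>k\<in>K. d k * (\<Prod>j\<in>K-{k}. 1 - a j * y))"
  using assms
proof (induction K rule: finite_induct)
  case empty
  show ?case by simp
next
  case (insert i K)
  have injK: "inj_on a K" using insert.prems(1) by (auto simp: inj_on_def)
  have aK: "\<And>k. k \<in> K \<Longrightarrow> a k \<noteq> 0" using insert.prems(2) by auto
  obtain d where d: "\<And>y. (\<Prod>k\<in>K. 1 - b k * y) = (\<Prod>k\<in>K. b k / a k) * (\<Prod>k\<in>K. 1 - a k * y)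
               + (\<Sum>k\<in>K. d k * (\<Prod>j\<in>K-{k}. 1 - a j * y))"
    using insert.IH[OF injK aK] by blast
  define \<alpha> where "\<alpha> = a i"
  define \<beta> where "\<beta> = b i / a i"
  define c where "c = (\<Prod>k\<in>K. b k / a k)"
  define S where "S = (\<Sum>k\<in>K. d k * (\<alpha> / (a k - \<alpha>)))"
  have \<alpha>: "\<alpha> \<noteq> 0" unfolding \<alpha>_def using insert.prems(2) by auto
  have ne: "a k - \<alpha> \<noteq> 0" if "k \<in> K" for k
    using insert.prems(1) that insert.hyps(2) unfolding \<alpha>_def inj_on_def by force
  define d' where "d' k = (if k = i then (1 - \<beta>) * (c - S) else d k * (\<beta> + (1 - \<beta>) * a k / (a k - \<alpha>)))" for k
  show ?case
  proof (intro exI allI)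
    fix y
    define D where "D = (\<Prod>k\<in>K. 1 - a k * y)"
    define Dk where "Dk k = (\<Prod>j\<in>K-{k}. 1 - a j * y)" for k
    define u where "u = 1 - \<alpha> * y"
    have Drem: "D = (1 - a k * y) * Dk k" if "k \<in> K" for k
      unfolding D_def Dk_def using insert.hyps(1) that by (rule prod.remove)
    have bi: "1 - b i * y = \<beta> * u + (1 - \<beta>)"
      unfolding \<beta>_def u_def \<alpha>_def using \<alpha> unfolding \<alpha>_def by (simp add: field_simps)
    have key: "d k * Dk k * (1 - b i * y) = d' k * (u * Dk k) - (1 - \<beta>) * D * (d k * (\<alpha> / (a k - \<alpha>)))"
      if k: "k \<in> K" for k
    proof -
      have "k \<noteq> i" using k insert.hyps(2) by auto
      hence dk: "d' k = d k * (\<beta> + (1 - \<beta>) * a k / (a k - \<alpha>))" by (simp add: d'_def)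
      have "d' k * (u * Dk k) - (1 - \<beta>) * D * (d k * (\<alpha> / (a k - \<alpha>)))
          = d k * Dk k * ((\<beta> + (1 - \<beta>) * a k / (a k - \<alpha>)) * u - (1 - \<beta>) * (1 - a k * y) * (\<alpha> / (a k - \<alpha>)))"
        unfolding dk Drem[OF k] by (simp add: algebra_simps add_divide_distrib)
      also have "(\<beta> + (1 - \<beta>) * a k / (a k - \<alpha>)) * u - (1 - \<beta>) * (1 - a k * y) * (\<alpha> / (a k - \<alpha>))
          = \<beta> * u + (1 - \<beta>)"
      proof -
        have h: "a k * u - \<alpha> * (1 - a k * y) = a k - \<alpha>" unfolding u_def by (simp add: algebra_simps)
        have "(\<beta> + (1 - \<beta>) * a k / (a k - \<alpha>)) * u - (1 - \<beta>) * (1 - a k * y) * (\<alpha> / (a k - \<alpha>))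
            = \<beta> * u + (1 - \<beta>) * ((a k * u - \<alpha> * (1 - a k * y)) / (a k - \<alpha>))"
          using ne[OF k] by (rule aux_pf)
        also have "\<dots> = \<beta> * u + (1 - \<beta>)" unfolding h using ne[OF k] by simp
        finally show ?thesis .
      qed
      finally show ?thesis unfolding bi by simp
    qed
    have sumK: "(\<Sum>k\<in>K. d k * Dk k) * (1 - b i * y) = (\<Sum>k\<in>K. d' k * (u * Dk k)) - (1 - \<beta>) * D * S"
      unfolding sum_distrib_right S_def sum_distrib_left
      by (simp add: key sum_subtractf)
    have P1: "(\<Prod>k\<in>insert i K. 1 - b k * y) = (1 - b i * y) * (c * D + (\<Sum>k\<in>K. d k * Dk k))"
      using insert.hyps d[of y] unfolding c_def D_def Dk_def by simp
    have P2: "(\<Prod>k\<in>insert i K. b k / a k) = \<beta> * c" using insert.hyps unfolding \<beta>_def c_def by simp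
    have P3: "(\<Prod>k\<in>insert i K. 1 - a k * y) = u * D" using insert.hyps unfolding u_def D_def \<alpha>_def by simp
    have P4: "(\<Sum>k\<in>insert i K. d' k * (\<Prod>j\<in>insert i K - {k}. 1 - a j * y)) = d' i * D + (\<Sum>k\<in>K. d' k * (u * Dk k))"
    proof -
      have "(\<Sum>k\<in>insert i K. d' k * (\<Prod>j\<in>insert i K - {k}. 1 - a j * y))
          = d' i * (\<Prod>j\<in>insert i K - {i}. 1 - a j * y) + (\<Sum>k\<in>K. d' k * (\<Prod>j\<in>insert i K - {k}. 1 - a j * y))"
        using insert.hyps by simp
      also have "(\<Prod>j\<in>insert i K - {i}. 1 - a j * y) = D"
        unfolding D_def using insert.hyps by (simp add: insert_Diff_if)
      also have "(\<Sum>k\<in>K. d' k * (\<Prod>j\<in>insert i K - {k}. 1 - a j * y)) = (\<Sum>k\<in>K. d' k * (u * Dk k))"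
      proof (intro sum.cong refl)
        fix k assume k: "k \<in> K"
        hence "insert i K - {k} = insert i (K - {k})" using insert.hyps by auto
        thus "d' k * (\<Prod>j\<in>insert i K - {k}. 1 - a j * y) = d' k * (u * Dk k)"
          unfolding Dk_def u_def \<alpha>_def using insert.hyps by simp
      qed
      finally show ?thesis .
    qed
    have di: "d' i = (1 - \<beta>) * (c - S)" by (simp add: d'_def)
    show "(\<Prod>k\<in>insert i K. 1 - b k * y) = (\<Prod>k\<in>insert i K. b k / a k) * (\<Prod>k\<in>insert i K. 1 - a k * y)
               + (\<Sum>k\<in>insert i K. d' k * (\<Prod>j\<in>insert i K - {k}. 1 - a j * y))"
      unfolding P1 P2 P3 P4 di
      using sumK bi by algebra
  qed
qed

lemma lagrange:
  fixes a b :: "'i \<Rightarrow> complex"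
  assumes K: "finite K" "inj_on a K" "\<And>k. k \<in> K \<Longrightarrow> a k \<noteq> 0"
     and y: "\<And>k. k \<in> K \<Longrightarrow> 1 - a k * y \<noteq> 0"
  shows "(\<Prod>k\<in>K. 1 - b k * y) / (\<Prod>k\<in>K. 1 - a k * y) = (\<Prod>k\<in>K. b k / a k)
          + (\<Sum>k\<in>K. ((\<Prod>j\<in>K. 1 - b j / a k) / (\<Prod>j\<in>K-{k}. 1 - a j / a k)) / (1 - a k * y))"
proof -
  obtain d where d: "\<And>y. (\<Prod>k\<in>K. 1 - b k * y) = (\<Prod>k\<in>K. b k / a k) * (\<Prod>k\<in>K. 1 - a k * y)
               + (\<Sum>k\<in>K. d k * (\<Prod>j\<in>K-{k}. 1 - a j * y))"
    using lagrange_ex[OF K] by blast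
  have dval: "d m = (\<Prod>j\<in>K. 1 - b j / a m) / (\<Prod>j\<in>K-{m}. 1 - a j / a m)" if m: "m \<in> K" for m
  proof -
    have E: "(\<Prod>j\<in>K-{m}. 1 - a j / a m) \<noteq> 0"
    proof -
      have "1 - a j / a m \<noteq> 0" if "j \<in> K - {m}" for j
      proof
        assume "1 - a j / a m = 0"
        hence "a j = a m" using K(3)[OF m] by (simp add: field_simps)
        thus False using K(2) that m by (auto simp: inj_on_def)
      qed
      hence "\<not> (\<exists>j\<in>K-{m}. 1 - a j / a m = 0)" by blast
      thus ?thesis using K(1) by (subst prod_zero_iff) auto
    qed
    have z1: "(\<Prod>k\<in>K. 1 - a k * (1 / a m)) = 0"
      using K(1) m K(3)[OF m] by (intro prod_zero) (auto intro!: bexI[of _ m])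
    have z2: "(\<Prod>j\<in>K-{k}. 1 - a j * (1 / a m)) = 0" if "k \<in> K" "k \<noteq> m" for k
      using K(1) m that K(3)[OF m] by (intro prod_zero) (auto intro!: bexI[of _ m])
    have "(\<Sum>k\<in>K. d k * (\<Prod>j\<in>K-{k}. 1 - a j * (1 / a m))) = d m * (\<Prod>j\<in>K-{m}. 1 - a j * (1 / a m))
          + (\<Sum>k\<in>K-{m}. d k * (\<Prod>j\<in>K-{k}. 1 - a j * (1 / a m)))"
      by (rule sum.remove[OF K(1) m])
    also have "(\<Sum>k\<in>K-{m}. d k * (\<Prod>j\<in>K-{k}. 1 - a j * (1 / a m))) = 0"
    proof (intro sum.neutral ballI)
      fix k assume "k \<in> K - {m}"
      thus "d k * (\<Prod>j\<in>K-{k}. 1 - a j * (1 / a m)) = 0" using z2[of k] by simp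
    qed
    finally have "(\<Sum>k\<in>K. d k * (\<Prod>j\<in>K-{k}. 1 - a j * (1 / a m))) = d m * (\<Prod>j\<in>K-{m}. 1 - a j * (1 / a m))"
      by simp
    hence "(\<Prod>k\<in>K. 1 - b k * (1 / a m)) = d m * (\<Prod>j\<in>K-{m}. 1 - a j / a m)"
      using d[of "1 / a m"] z1 by simp
    thus ?thesis using E by (simp add: field_simps)
  qed
  have Dnz: "(\<Prod>k\<in>K. 1 - a k * y) \<noteq> 0" using y K(1) by simp
  have "(\<Prod>k\<in>K. 1 - b k * y) / (\<Prod>k\<in>K. 1 - a k * y) = (\<Prod>k\<in>K. b k / a k)
          + (\<Sum>k\<in>K. d k * ((\<Prod>j\<in>K-{k}. 1 - a j * y) / (\<Prod>k\<in>K. 1 - a k * y)))"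
  proof -
    have "(\<Sum>k\<in>K. d k * ((\<Prod>j\<in>K-{k}. 1 - a j * y) / (\<Prod>k\<in>K. 1 - a k * y)))
        = (\<Sum>k\<in>K. d k * (\<Prod>j\<in>K-{k}. 1 - a j * y)) / (\<Prod>k\<in>K. 1 - a k * y)"
      by (simp add: sum_divide_distrib)
    thus ?thesis unfolding d[of y] using Dnz by (simp add: add_divide_distrib)
  qed
  also have "(\<Sum>k\<in>K. d k * ((\<Prod>j\<in>K-{k}. 1 - a j * y) / (\<Prod>k\<in>K. 1 - a k * y)))
        = (\<Sum>k\<in>K. ((\<Prod>j\<in>K. 1 - b j / a k) / (\<Prod>j\<in>K-{k}. 1 - a j / a k)) / (1 - a k * y))"
  proof (intro sum.cong refl)
    fix k assume k: "k \<in> K"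
    have "(\<Prod>k\<in>K. 1 - a k * y) = (1 - a k * y) * (\<Prod>j\<in>K-{k}. 1 - a j * y)"
      using K(1) k by (rule prod.remove)
    moreover have "(\<Prod>j\<in>K-{k}. 1 - a j * y) \<noteq> 0" using y K(1) by simp
    ultimately have "(\<Prod>j\<in>K-{k}. 1 - a j * y) / (\<Prod>k\<in>K. 1 - a k * y) = 1 / (1 - a k * y)"
      by simp
    thus "d k * ((\<Prod>j\<in>K-{k}. 1 - a j * y) / (\<Prod>k\<in>K. 1 - a k * y)) =
          ((\<Prod>j\<in>K. 1 - b j / a k) / (\<Prod>j\<in>K-{k}. 1 - a j / a k)) / (1 - a k * y)"
      unfolding dval[OF k] by simp
  qed
  finally show ?thesis .
qed

lemma poch_Suc_shift: "poch a b (Suc n) = (1 - a) * poch (a*b) b n"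
  by (induction n) (auto simp: poch_def power_mult_distrib mult_ac)

lemma pow_inj:
  fixes p :: complex
  assumes "p \<noteq> 0" "norm p < 1" "p ^ i = p ^ j"
  shows "i = j"
proof -
  have "norm p ^ i = norm p ^ j" using assms(3) by (metis norm_power)
  moreover have "0 < norm p" using assms(1) by simp
  ultimately show ?thesis using assms(2)
    by (metis linorder_neqE_nat power_strict_decreasing_iff order_less_irrefl)
qed

lemma prod_excl:
  fixes g :: "nat \<Rightarrow> 'a::comm_monoid_mult"
  assumes "i \<le> N"
  shows "(\<Prod>j\<in>{..N}-{i}. g j) = (\<Prod>j<i. g j) * (\<Prod>t<N-i. g (Suc (i+t)))"
proof -
  define G where "G j = (if j = i then 1 else g j)" for j
  have "(\<Prod>j\<in>{..N}. G j) = G i * (\<Prod>j\<in>{..N}-{i}. G j)"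
    using assms by (intro prod.remove) auto
  also have "(\<Prod>j\<in>{..N}-{i}. G j) = (\<Prod>j\<in>{..N}-{i}. g j)"
    by (intro prod.cong) (auto simp: G_def)
  finally have 1: "(\<Prod>j\<in>{..N}-{i}. g j) = (\<Prod>j\<in>{..N}. G j)" by (simp add: G_def)
  have "{..N} = {..<i + Suc (N - i)}" using assms by auto
  hence "(\<Prod>j\<in>{..N}. G j) = (\<Prod>j<i. G j) * (\<Prod>t<Suc (N - i). G (i + t))"
    using prod_split_add[of G i "Suc (N - i)"] by simp
  also have "(\<Prod>t<Suc (N - i). G (i + t)) = G i * (\<Prod>t<N-i. G (i + Suc t))"
    by (subst prod.lessThan_Suc_shift) simp
  also have "(\<Prod>j<i. G j) = (\<Prod>j<i. g j)" by (intro prod.cong) (auto simp: G_def)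
  also have "(\<Prod>t<N-i. G (i + Suc t)) = (\<Prod>t<N-i. g (Suc (i + t)))" by (intro prod.cong) (auto simp: G_def)
  finally show ?thesis using 1 by (simp add: G_def)
qed

lemma coef_closed:
  fixes p x :: complex
  assumes p: "p \<noteq> 0" "norm p < 1" and x: "x \<noteq> 0" and i: "i \<le> N"
  shows "(\<Prod>j\<le>N. 1 - x * (p ^ j / p ^ i)) / (\<Prod>j\<in>{..N}-{i}. 1 - p ^ j / p ^ i)
       = x ^ i * poch x p (Suc (N - i)) * poch (p/x) p i / (poch p p i * poch p p (N - i))"
proof -
  define f where "f j = 1 - x * (p ^ j / p ^ i)" for j
  define g where "g j = 1 - p ^ j / p ^ i" for j
  have pn: "p * p ^ s \<noteq> 1" for s using pp_ne1[OF p(2)] .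
  have "(\<Prod>j\<le>N. f j) = f i * (\<Prod>j\<in>{..N}-{i}. f j)"
    using i by (intro prod.remove) auto
  hence "(\<Prod>j\<le>N. f j) / (\<Prod>j\<in>{..N}-{i}. g j) = (1 - x) * (\<Prod>j\<in>{..N}-{i}. f j / g j)"
    using p by (simp add: f_def prod_dividef)
  also have "(\<Prod>j\<in>{..N}-{i}. f j / g j) = (\<Prod>j<i. f j / g j) * (\<Prod>t<N-i. f (Suc (i+t)) / g (Suc (i+t)))"
    using i by (rule prod_excl)
  also have "(\<Prod>j<i. f j / g j) = (\<Prod>s<i. f (i - Suc s) / g (i - Suc s))"
    by (rule prod.nat_diff_reindex[symmetric])
  also have "\<dots> = (\<Prod>s<i. x * ((1 - (p/x) * p ^ s) / (1 - p * p ^ s)))"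
  proof (intro prod.cong refl)
    fix s assume "s \<in> {..<i}"
    hence "i - Suc s + Suc s = i" by simp
    hence e: "p ^ i = p ^ (i - Suc s) * (p * p ^ s)" by (metis power_add power_Suc)
    have ne: "1 - p * p ^ s \<noteq> 0" using pn[of s] by auto
    have ne2: "p * p ^ s - 1 \<noteq> 0" using pn[of s] by auto
    show "f (i - Suc s) / g (i - Suc s) = x * ((1 - (p/x) * p ^ s) / (1 - p * p ^ s))"
      unfolding f_def g_def e using p x ne ne2 by (simp add: field_simps)
  qed
  also have "\<dots> = x ^ i * (poch (p/x) p i / poch p p i)"
    by (simp add: prod.distrib prod_dividef poch_def)
  also have "(\<Prod>t<N-i. f (Suc (i+t)) / g (Suc (i+t))) = poch (x*p) p (N - i) / poch p p (N - i)"
    unfolding poch_def prod_dividef[symmetric] f_def g_def using p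
    by (intro prod.cong refl) (simp add: power_add field_simps)
  finally show ?thesis
    unfolding f_def g_def poch_Suc_shift[of x p "N - i"] by (simp add: field_simps mult.commute)
qed

definition KA1 :: "complex \<Rightarrow> complex \<Rightarrow> nat \<Rightarrow> nat \<Rightarrow> complex" where
  "KA1 p x n m = poch x p (Suc (n - m)) * poch (p/x) p (n+m) / (poch p p (n+m) * poch p p (n - m))"
definition KA2 :: "complex \<Rightarrow> complex \<Rightarrow> nat \<Rightarrow> nat \<Rightarrow> complex" where
  "KA2 p x n m = poch x p (Suc (n + Suc m)) * poch (p/x) p (n - Suc m) / (poch p p (n - Suc m) * poch p p (n + Suc m))"

lemma kron_finite:
  fixes p x y :: complex
  assumes p: "p \<noteq> 0" "norm p < 1" and x: "x \<noteq> 0" and y: "y \<noteq> 0" "\<And>m. y * p^m \<noteq> 1" "\<And>m. p * p^m \<noteq> y"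
  shows "poch (x*y) p (Suc n) / poch y p (Suc n) * (poch (p/(x*y)) p n / poch (p/y) p n)
     = x ^ Suc n + (\<Sum>m\<le>n. x^m * KA1 p x n m / (1 - y * p^m))
                 + (\<Sum>m<n. inverse x ^ Suc m * KA2 p x n m / (1 - y / (p * p^m)))"
proof -
  define a where "a i = p ^ i / p ^ n" for i
  define b where "b i = x * a i" for i
  define K where "K = {..2*n}"
  have pn: "p ^ k \<noteq> 0" for k using p by simp
  have aval1: "a (n+m) = p ^ m" for m unfolding a_def using pn by (simp add: power_add)
  have aval2: "a (n - Suc m) = 1 / (p * p ^ m)" if "m < n" for m
  proof -
    have "n - Suc m + Suc m = n" using that by simp
    hence "p ^ n = p ^ (n - Suc m) * (p * p ^ m)" by (metis power_add power_Suc)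
    thus ?thesis unfolding a_def using pn p by (simp add: field_simps)
  qed
  have anz: "a k \<noteq> 0" for k unfolding a_def using pn by simp
  have inj: "inj_on a K"
  proof (rule inj_onI)
    fix i j assume "a i = a j"
    hence "p ^ i = p ^ j" unfolding a_def using pn p(1) by (auto simp: field_simps)
    thus "i = j" using pow_inj p by blast
  qed
  have ya: "1 - a k * y \<noteq> 0" if "k \<in> K" for k
  proof (cases "n \<le> k")
    case True
    then obtain m where "k = n + m" using le_Suc_ex by blast
    thus ?thesis using aval1 y(2)[of m] by (auto simp: mult.commute)
  next
    case False
    define m where "m = n - Suc k"
    have m: "m < n" "k = n - Suc m" using False unfolding m_def by auto
    have ak: "a k = 1 / (p * p ^ m)" using aval2[OF m(1)] m(2) by simp
    show ?thesis
    proof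
      assume "1 - a k * y = 0"
      hence "y = p * p ^ m" unfolding ak using p by (simp add: field_simps)
      thus False using y(3)[of m] by simp
    qed
  qed
  have L: "(\<Prod>k\<in>K. 1 - b k * y) / (\<Prod>k\<in>K. 1 - a k * y) = (\<Prod>k\<in>K. b k / a k)
          + (\<Sum>k\<in>K. ((\<Prod>j\<in>K. 1 - b j / a k) / (\<Prod>j\<in>K-{k}. 1 - a j / a k)) / (1 - a k * y))"
    by (rule lagrange) (use inj anz ya in \<open>auto simp: K_def\<close>)
  define E where "E = poch (x*y) p (Suc n) / poch y p (Suc n) * (poch (p/(x*y)) p n / poch (p/y) p n)"
  define R where "R = (\<Sum>m\<le>n. x^m * KA1 p x n m / (1 - y * p^m))
                 + (\<Sum>m<n. inverse x ^ Suc m * KA2 p x n m / (1 - y / (p * p^m)))"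
  have LHS: "(\<Prod>k\<in>K. 1 - b k * y) / (\<Prod>k\<in>K. 1 - a k * y) = x ^ n * E"
  proof -
    have "(\<Prod>k\<in>K. 1 - b k * y) / (\<Prod>k\<in>K. 1 - a k * y) = (\<Prod>k\<le>2*n. (1 - b k * y) / (1 - a k * y))"
      unfolding K_def by (simp add: prod_dividef)
    also have "\<dots> = (\<Prod>m\<le>n. (1 - b (n+m) * y) / (1 - a (n+m) * y)) *
                      (\<Prod>m<n. (1 - b (n - Suc m) * y) / (1 - a (n - Suc m) * y))"
      by (rule prod_split2n)
    also have "(\<Prod>m\<le>n. (1 - b (n+m) * y) / (1 - a (n+m) * y)) = poch (x*y) p (Suc n) / poch y p (Suc n)"
      unfolding b_def aval1 poch_def lessThan_Suc_atMost[symmetric] prod_dividef[symmetric]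
      by (intro prod.cong refl) (simp add: mult_ac)
    also have "(\<Prod>m<n. (1 - b (n - Suc m) * y) / (1 - a (n - Suc m) * y))
             = (\<Prod>m<n. x * ((1 - (p/(x*y)) * p^m) / (1 - (p/y) * p^m)))"
    proof (intro prod.cong refl)
      fix m assume "m \<in> {..<n}"
      hence m: "m < n" by simp
      have ne: "p * p ^ m - y \<noteq> 0" using y(3)[of m] by auto
      show "(1 - b (n - Suc m) * y) / (1 - a (n - Suc m) * y) = x * ((1 - (p/(x*y)) * p^m) / (1 - (p/y) * p^m))"
        unfolding b_def aval2[OF m] using p x y(1) ne pn[of m] by (simp add: field_simps)
    qed
    also have "\<dots> = x ^ n * (poch (p/(x*y)) p n / poch (p/y) p n)"
      by (simp add: prod.distrib prod_dividef poch_def)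
    finally show ?thesis unfolding E_def by (simp add: mult_ac)
  qed
  have coef: "(\<Prod>j\<in>K. 1 - b j / a k) / (\<Prod>j\<in>K-{k}. 1 - a j / a k)
        = x ^ k * poch x p (Suc (2*n - k)) * poch (p/x) p k / (poch p p k * poch p p (2*n - k))"
    if k: "k \<in> K" for k
  proof -
    have "(\<Prod>j\<in>K. 1 - b j / a k) = (\<Prod>j\<le>2*n. 1 - x * (p ^ j / p ^ k))"
      unfolding K_def b_def a_def using pn p(1) by (intro prod.cong refl) (auto simp: field_simps)
    moreover have "(\<Prod>j\<in>K-{k}. 1 - a j / a k) = (\<Prod>j\<in>{..2*n}-{k}. 1 - p ^ j / p ^ k)"
      unfolding K_def a_def using pn p(1) by (intro prod.cong refl) (auto simp: field_simps)
    ultimately show ?thesis using coef_closed[OF p x, of k "2*n"] k by (simp add: K_def)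
  qed
  have RHS: "(\<Prod>k\<in>K. b k / a k)
          + (\<Sum>k\<in>K. ((\<Prod>j\<in>K. 1 - b j / a k) / (\<Prod>j\<in>K-{k}. 1 - a j / a k)) / (1 - a k * y))
          = x ^ n * (x ^ Suc n + R)"
  proof -
    have "(\<Prod>k\<in>K. b k / a k) = x ^ Suc (2*n)"
      unfolding b_def K_def using anz by simp
    also have "\<dots> = x ^ n * x ^ Suc n" by (simp add: power_add[symmetric] mult_2)
    finally have P: "(\<Prod>k\<in>K. b k / a k) = x ^ n * x ^ Suc n" .
    define T where "T k = x ^ k * poch x p (Suc (2*n - k)) * poch (p/x) p k / (poch p p k * poch p p (2*n - k)) / (1 - a k * y)" for k
    have "(\<Sum>k\<in>K. ((\<Prod>j\<in>K. 1 - b j / a k) / (\<Prod>j\<in>K-{k}. 1 - a j / a k)) / (1 - a k * y)) = (\<Sum>k\<le>2*n. T k)"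
      unfolding T_def K_def using coef unfolding K_def by (intro sum.cong refl) auto
    also have "\<dots> = (\<Sum>m\<le>n. T (n+m)) + (\<Sum>m<n. T (n - Suc m))" by (rule sum_split2n)
    also have "(\<Sum>m\<le>n. T (n+m)) = (\<Sum>m\<le>n. x ^ n * (x^m * KA1 p x n m / (1 - y * p^m)))"
    proof (intro sum.cong refl)
      fix m assume "m \<in> {..n}"
      hence "2*n - (n+m) = n - m" by simp
      thus "T (n+m) = x ^ n * (x^m * KA1 p x n m / (1 - y * p^m))"
        unfolding T_def KA1_def aval1 by (simp add: power_add mult_ac)
    qed
    also have "(\<Sum>m<n. T (n - Suc m)) = (\<Sum>m<n. x ^ n * (inverse x ^ Suc m * KA2 p x n m / (1 - y / (p * p^m))))"
    proof (intro sum.cong refl)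
      fix m assume "m \<in> {..<n}"
      hence m: "m < n" by simp
      hence e: "2*n - (n - Suc m) = n + Suc m" by simp
      have "n - Suc m + Suc m = n" using m by simp
      hence xe: "x ^ n = x ^ (n - Suc m) * x ^ Suc m" by (metis power_add)
      have xi: "x ^ n * inverse x ^ Suc m = x ^ (n - Suc m)"
        unfolding xe using x by (simp add: power_inverse field_simps)
      have "x ^ n * (inverse x ^ Suc m * KA2 p x n m / (1 - y / (p * p^m)))
          = (x ^ n * inverse x ^ Suc m) * KA2 p x n m / (1 - y / (p * p^m))"
        by (simp add: mult.assoc)
      also have "\<dots> = T (n - Suc m)"
        unfolding xi T_def KA2_def aval2[OF m] e by (simp add: divide_inverse mult_ac)
      finally show "T (n - Suc m) = x ^ n * (inverse x ^ Suc m * KA2 p x n m / (1 - y / (p * p^m)))" ..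
    qed
    finally show ?thesis unfolding P R_def by (simp add: sum_distrib_left distrib_left)
  qed
  have "x ^ n * E = x ^ n * (x ^ Suc n + R)" using L LHS RHS by simp
  hence "E = x ^ Suc n + R" using x by simp
  thus ?thesis unfolding E_def R_def by (simp add: add.assoc)
qed

lemma summable_S1:
  fixes p x y :: complex
  assumes "norm p < 1" "norm x < 1"
  shows "summable (\<lambda>m. norm (x^m / (1 - y * p^m)))"
proof -
  have "(\<lambda>m. 1 - y * p^m) \<longlonglongrightarrow> 1 - y * 0"
    by (intro tendsto_intros LIMSEQ_power_zero assms)
  hence "(\<lambda>m. norm (1 - y * p^m)) \<longlonglongrightarrow> 1" by (auto dest: tendsto_norm)
  hence ev: "eventually (\<lambda>m. norm (1 - y * p^m) > 1/2) sequentially"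
    by (intro order_tendstoD) auto
  have "eventually (\<lambda>m. norm (norm (x^m / (1 - y * p^m))) \<le> 2 * norm x ^ m) sequentially"
    using ev
  proof eventually_elim
    case (elim m)
    have "norm (x^m / (1 - y * p^m)) = norm x ^ m / norm (1 - y * p^m)"
      by (simp add: norm_divide norm_power)
    also have "\<dots> \<le> norm x ^ m / (1/2)"
      using elim by (intro divide_left_mono) auto
    finally show ?case by simp
  qed
  moreover have "summable (\<lambda>m. 2 * norm x ^ m)"
    using assms by (intro summable_mult summable_geometric) auto
  ultimately show ?thesis by (rule summable_comparison_test_ev)
qed

lemma summable_S2:
  fixes p x y :: complex
  assumes "norm p < norm x" "norm x < 1" "y \<noteq> 0" "\<And>m. p * p^m \<noteq> y" and p0: "p \<noteq> 0"
  shows "summable (\<lambda>m. norm (inverse x ^ Suc m / (1 - y / (p * p^m))))"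
proof -
  have np: "norm p < 1" using assms by simp
  have x: "x \<noteq> 0" using assms by auto
  have "(\<lambda>m. p * p^m - y) \<longlonglongrightarrow> p * 0 - y"
    by (intro tendsto_intros LIMSEQ_power_zero np)
  hence "(\<lambda>m. norm (p * p^m - y)) \<longlonglongrightarrow> norm y" by (auto dest: tendsto_norm)
  hence ev: "eventually (\<lambda>m. norm (p * p^m - y) > norm y / 2) sequentially"
    using assms(3) by (intro order_tendstoD) auto
  have "eventually (\<lambda>m. norm (norm (inverse x ^ Suc m / (1 - y / (p * p^m)))) \<le> 2 / norm y * norm (p/x) ^ Suc m) sequentially"
    using ev
  proof eventually_elim
    case (elim m)
    have P: "p * p ^ m \<noteq> 0" "p * p ^ m - y \<noteq> 0" using elim assms(3) p0 by auto
    have "inverse x ^ Suc m / (1 - y / (p * p^m)) = (p/x) ^ Suc m / (p * p^m - y)"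
      using P x by (simp add: field_simps power_inverse)
    hence "norm (inverse x ^ Suc m / (1 - y / (p * p^m))) = norm (p/x) ^ Suc m / norm (p * p^m - y)"
      by (simp add: norm_divide norm_power del: power_Suc)
    also have "\<dots> \<le> norm (p/x) ^ Suc m / (norm y / 2)"
      using elim assms(3) P by (intro divide_left_mono) (auto intro!: mult_pos_pos)
    finally show ?case by (simp add: field_simps)
  qed
  moreover have "summable (\<lambda>m. 2 / norm y * norm (p/x) ^ Suc m)"
    using assms x by (intro summable_mult summable_geometric summable_Suc_iff[THEN iffD2])
                     (auto simp: norm_divide)
  ultimately show ?thesis by (rule summable_comparison_test_ev)
qed

theorem kron:
  fixes p x y :: complex
  assumes p: "p \<noteq> 0" "norm p < norm x" and x: "norm x < 1"
      and y: "y \<noteq> 0" "\<And>m. y * p^m \<noteq> 1" "\<And>m. p * p^m \<noteq> y"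
  shows "(\<lambda>m. x^m / (1 - y * p^m) + inverse x ^ Suc m / (1 - y / (p * p^m))) sums
      (qpoch_inf p p ^ 2 * (qpoch_inf (x*y) p * qpoch_inf (p/(x*y)) p) /
        ((qpoch_inf x p * qpoch_inf (p/x) p) * (qpoch_inf y p * qpoch_inf (p/y) p)))"
proof -
  have np: "norm p < 1" using p x by simp
  have x0: "x \<noteq> 0" using p by auto
  define L where "L = qpoch_inf p p"
  define Tx where "Tx = qpoch_inf x p * qpoch_inf (p/x) p"
  define Ty where "Ty = qpoch_inf y p * qpoch_inf (p/y) p"
  define Txy where "Txy = qpoch_inf (x*y) p * qpoch_inf (p/(x*y)) p"
  have L: "L \<noteq> 0" unfolding L_def using qp_nz[OF np] pp_ne1[OF np] by blast
  have Tx: "Tx \<noteq> 0"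
  proof -
    have "x * p ^ j \<noteq> 1" for j
    proof
      assume "x * p ^ j = 1"
      hence "norm x * norm p ^ j = 1" by (metis norm_mult norm_power norm_one)
      moreover have "norm x * norm p ^ j < 1"
      proof -
        have h: "norm p ^ j \<le> 1" using np by (simp add: power_le_one)
        have "norm x * norm p ^ j \<le> norm x * 1" by (rule mult_left_mono[OF h]) simp
        thus ?thesis using x by simp
      qed
      ultimately show False by simp
    qed
    moreover have "p / x * p ^ j \<noteq> 1" for j
    proof
      assume "p / x * p ^ j = 1"
      hence "norm (p/x) * norm p ^ j = 1" by (metis norm_mult norm_power norm_one)
      moreover have "norm (p/x) < 1" using p x0 by (simp add: norm_divide field_simps)
      hence "norm (p/x) * norm p ^ j < 1"
      proof -
        assume a: "norm (p/x) < 1"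
        have h: "norm p ^ j \<le> 1" using np by (simp add: power_le_one)
        have "norm (p/x) * norm p ^ j \<le> norm (p/x) * 1" by (rule mult_left_mono[OF h]) simp
        thus ?thesis using a by simp
      qed
      ultimately show False by simp
    qed
    ultimately show ?thesis unfolding Tx_def using qp_nz[OF np] by auto
  qed
  have Ty: "Ty \<noteq> 0"
  proof -
    have "p / y * p ^ j \<noteq> 1" for j using y(3)[of j] y(1) by (auto simp: field_simps)
    moreover have "y * p ^ j \<noteq> 1" for j using y(2) .
    ultimately show ?thesis unfolding Ty_def using qp_nz[OF np] by auto
  qed
  define S where "S m = x^m / (1 - y * p^m) + inverse x ^ Suc m / (1 - y / (p * p^m))" for m
  define KT where "KT n m = (if m \<le> n then x^m * KA1 p x n m / (1 - y * p^m) else 0) +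
      (if m < n then inverse x ^ Suc m * KA2 p x n m / (1 - y / (p * p^m)) else 0)" for n m
  define Bl where "Bl m = x^m / (1 - y * p^m) * (Tx / L^2) + inverse x ^ Suc m / (1 - y / (p * p^m)) * (Tx / L^2)" for m
  have PL: "\<And>a. (\<lambda>n. poch a p n) \<longlonglongrightarrow> qpoch_inf a p" using qp_lim[OF np] .
  have PLS: "\<And>a. (\<lambda>n. poch a p (Suc n)) \<longlonglongrightarrow> qpoch_inf a p" using PL by (intro LIMSEQ_Suc)
  have KA1l: "(\<lambda>n. KA1 p x n m) \<longlonglongrightarrow> Tx / L^2" for m
  proof -
    have "(\<lambda>n. KA1 p x n m) \<longlonglongrightarrow> qpoch_inf x p * qpoch_inf (p/x) p / (L * L)"
      unfolding KA1_def L_def using L[unfolded L_def]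
      by (intro tendsto_intros lim_minus[OF PLS] lim_plus[OF PL] lim_minus[OF PL]) auto
    thus ?thesis by (simp add: Tx_def power2_eq_square)
  qed
  have KA2l: "(\<lambda>n. KA2 p x n m) \<longlonglongrightarrow> Tx / L^2" for m
  proof -
    have "(\<lambda>n. KA2 p x n m) \<longlonglongrightarrow> qpoch_inf x p * qpoch_inf (p/x) p / (L * L)"
      unfolding KA2_def L_def using L[unfolded L_def]
      by (intro tendsto_intros lim_plus[OF PLS] lim_plus[OF PL] lim_minus[OF PL]) auto
    thus ?thesis by (simp add: Tx_def power2_eq_square)
  qed
  have lim: "(\<lambda>n. KT n m) \<longlonglongrightarrow> Bl m" for m
  proof -
    have "(\<lambda>n. x^m * KA1 p x n m / (1 - y * p^m) + inverse x ^ Suc m * KA2 p x n m / (1 - y / (p * p^m)))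
          \<longlonglongrightarrow> x^m * (Tx / L^2) / (1 - y * p^m) + inverse x ^ Suc m * (Tx / L^2) / (1 - y / (p * p^m))"
    proof -
      have d1: "1 - y * p^m \<noteq> 0" using y(2)[of m] by auto
      have d2: "1 - y / (p * p^m) \<noteq> 0"
      proof
        assume "1 - y / (p * p^m) = 0"
        hence "y = p * p^m" using p(1) by (simp add: field_simps)
        thus False using y(3)[of m] by simp
      qed
      show ?thesis by (intro tendsto_intros KA1l KA2l d1 d2)
    qed
    moreover have "eventually (\<lambda>n. x^m * KA1 p x n m / (1 - y * p^m) + inverse x ^ Suc m * KA2 p x n m / (1 - y / (p * p^m)) = KT n m) sequentially"
      using eventually_ge_at_top[of "Suc m"] by eventually_elim (auto simp: KT_def)
    ultimately have "(\<lambda>n. KT n m) \<longlonglongrightarrow> x^m * (Tx / L^2) / (1 - y * p^m) + inverse x ^ Suc m * (Tx / L^2) / (1 - y / (p * p^m))"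
      by (rule Lim_transform_eventually)
    thus ?thesis unfolding Bl_def by (simp add: mult_ac)
  qed
  obtain K where K: "K > 0" "\<And>n. norm (inverse (poch p p n)) \<le> K"
    using poch_inv_bound[of p p] pp_ne1[OF np] np by blast
  define C where "C = exp (norm x / (1 - norm p)) * exp (norm (p/x) / (1 - norm p)) * K * K"
  have KAb: "norm (poch x p a * poch (p/x) p b / (poch p p c * poch p p d)) \<le> C" for a b c d
  proof -
    have "norm (poch x p a * poch (p/x) p b / (poch p p c * poch p p d)) =
       norm (poch x p a) * norm (poch (p/x) p b) * norm (inverse (poch p p c)) * norm (inverse (poch p p d))"
      by (simp add: norm_mult norm_divide divide_inverse)
    also have "\<dots> \<le> C" unfolding C_def
      using poch_norm_bound[OF np, of x a] poch_norm_bound[OF np, of "p/x" b] K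
      by (intro mult_mono) (auto intro: mult_nonneg_nonneg)
    finally show ?thesis .
  qed
  have KA1b: "norm (KA1 p x n m) \<le> C" for n m unfolding KA1_def by (rule KAb)
  have KA2b: "norm (KA2 p x n m) \<le> C" for n m unfolding KA2_def by (rule KAb)
  define M where "M m = C * norm (x^m / (1 - y * p^m)) + C * norm (inverse x ^ Suc m / (1 - y / (p * p^m)))" for m
  have C0: "C \<ge> 0" unfolding C_def using K by simp
  have bound: "norm (KT n m) \<le> M m" for n m
  proof -
    have "norm (KT n m) \<le> norm (if m \<le> n then x^m * KA1 p x n m / (1 - y * p^m) else 0) +
       norm (if m < n then inverse x ^ Suc m * KA2 p x n m / (1 - y / (p * p^m)) else 0)"
      unfolding KT_def by (rule norm_triangle_ineq)
    also have "\<dots> \<le> M m" unfolding M_def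
    proof (intro add_mono)
      have "norm (x^m * KA1 p x n m / (1 - y * p^m)) = norm (KA1 p x n m) * norm (x^m / (1 - y * p^m))"
        by (simp add: norm_mult norm_divide)
      also have "\<dots> \<le> C * norm (x^m / (1 - y * p^m))" using KA1b by (intro mult_right_mono) auto
      finally show "norm (if m \<le> n then x^m * KA1 p x n m / (1 - y * p^m) else 0) \<le> C * norm (x^m / (1 - y * p^m))"
        using C0 by auto
      have "norm (inverse x ^ Suc m * KA2 p x n m / (1 - y / (p * p^m))) = norm (KA2 p x n m) * norm (inverse x ^ Suc m / (1 - y / (p * p^m)))"
        by (simp add: norm_mult norm_divide del: power_Suc)
      also have "\<dots> \<le> C * norm (inverse x ^ Suc m / (1 - y / (p * p^m)))" using KA2b by (intro mult_right_mono) auto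
      finally show "norm (if m < n then inverse x ^ Suc m * KA2 p x n m / (1 - y / (p * p^m)) else 0) \<le> C * norm (inverse x ^ Suc m / (1 - y / (p * p^m)))"
        using C0 by auto
    qed
    finally show ?thesis .
  qed
  have sM: "summable M" unfolding M_def
    using summable_S1[OF np x, of y] summable_S2[OF p(2) x y(1) y(3) p(1)]
    by (intro summable_add summable_mult)
  note T = tannery_seq[of KT Bl M, OF lim bound sM]
  have fin: "suminf (KT n) = poch (x*y) p (Suc n) / poch y p (Suc n) * (poch (p/(x*y)) p n / poch (p/y) p n) - x ^ Suc n" for n
  proof -
    have "suminf (KT n) = (\<Sum>m\<le>n. KT n m)"
      by (rule suminf_finite) (auto simp: KT_def)
    also have "\<dots> = (\<Sum>m\<le>n. x^m * KA1 p x n m / (1 - y * p^m)) + (\<Sum>m\<le>n. if m < n then inverse x ^ Suc m * KA2 p x n m / (1 - y / (p * p^m)) else 0)"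
      unfolding KT_def by (simp add: sum.distrib)
    also have "(\<Sum>m\<le>n. if m < n then inverse x ^ Suc m * KA2 p x n m / (1 - y / (p * p^m)) else 0) = (\<Sum>m<n. inverse x ^ Suc m * KA2 p x n m / (1 - y / (p * p^m)))"
      unfolding lessThan_Suc_atMost[symmetric] by simp
    finally show ?thesis
      using kron_finite[OF p(1) np x0 y, of n] by (simp add: algebra_simps)
  qed
  have "(\<lambda>n. poch (x*y) p (Suc n) / poch y p (Suc n) * (poch (p/(x*y)) p n / poch (p/y) p n) - x ^ Suc n)
        \<longlonglongrightarrow> qpoch_inf (x*y) p / qpoch_inf y p * (qpoch_inf (p/(x*y)) p / qpoch_inf (p/y) p) - 0"
  proof (intro tendsto_intros PLS PL)
    show "qpoch_inf y p \<noteq> 0" "qpoch_inf (p/y) p \<noteq> 0" using Ty unfolding Ty_def by auto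
    show "(\<lambda>n. x ^ Suc n) \<longlonglongrightarrow> 0" using x by (intro LIMSEQ_Suc LIMSEQ_power_zero) auto
  qed
  with T(2) have sB: "suminf Bl = Txy / Ty"
    unfolding fin Txy_def Ty_def using LIMSEQ_unique by (fastforce simp: field_simps)
  have "(\<lambda>m. Bl m * (L^2 / Tx)) sums (suminf Bl * (L^2 / Tx))"
    using T(1) by (intro sums_mult2 summable_sums)
  moreover have "Bl m * (L^2 / Tx) = S m" for m
  proof -
    have c: "(Tx / L^2) * (L^2 / Tx) = 1" using Tx L by simp
    have "Bl m = S m * (Tx / L^2)" unfolding Bl_def S_def by (rule distrib_right[symmetric])
    hence "Bl m * (L^2 / Tx) = S m * ((Tx / L^2) * (L^2 / Tx))" by (simp add: mult.assoc)
    thus ?thesis using c by simp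
  qed
  ultimately have "S sums (Txy / Ty * (L^2 / Tx))" unfolding sB by simp
  thus ?thesis unfolding S_def L_def Tx_def Ty_def Txy_def by (simp add: field_simps)
qed

lemma infsum_int_split:
  fixes g :: "int \<Rightarrow> complex"
  assumes s1: "summable (\<lambda>m. norm (g (int m)))" and s2: "summable (\<lambda>m. norm (g (- int m - 1)))"
  shows "infsum g UNIV = (\<Sum>m. g (int m) + g (- int m - 1))"
proof -
  have a1: "((g \<circ> int) has_sum (\<Sum>m. g (int m))) UNIV"
    using s1 by (intro norm_summable_imp_has_sum) (auto simp: o_def intro!: summable_sums summable_norm_cancel)
  have a2: "((g \<circ> (\<lambda>m. - int m - 1)) has_sum (\<Sum>m. g (- int m - 1))) UNIV"
    using s2 by (intro norm_summable_imp_has_sum) (auto simp: o_def intro!: summable_sums summable_norm_cancel)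
  have b1: "(g has_sum (\<Sum>m. g (int m))) (range int)"
    using a1 by (subst has_sum_reindex) (auto simp: inj_on_def)
  have b2: "(g has_sum (\<Sum>m. g (- int m - 1))) (range (\<lambda>m. - int m - 1))"
    using a2 by (subst has_sum_reindex) (auto simp: inj_on_def)
  have "(g has_sum ((\<Sum>m. g (int m)) + (\<Sum>m. g (- int m - 1)))) (range int \<union> range (\<lambda>m. - int m - 1))"
    by (rule has_sum_Un_disjoint[OF b1 b2]) auto
  moreover have "range int \<union> range (\<lambda>m. - int m - 1) = UNIV"
  proof -
    have "j \<in> range int \<union> range (\<lambda>m. - int m - 1)" for j :: int
    proof (cases "j \<ge> 0")
      case True
      hence "j = int (nat j)" by simp
      thus ?thesis by blast
    next
      case False
      hence "j = - int (nat (- j - 1)) - 1" by simp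
      thus ?thesis by blast
    qed
    thus ?thesis by blast
  qed
  ultimately have "infsum g UNIV = (\<Sum>m. g (int m)) + (\<Sum>m. g (- int m - 1))"
    by (intro infsumI) simp
  also have "\<dots> = (\<Sum>m. g (int m) + g (- int m - 1))"
    using s1 s2 by (intro suminf_add) (auto intro: summable_norm_cancel)
  finally show ?thesis .
qed

lemma qp_nz2:
  fixes a b :: complex
  assumes "norm a < 1" "norm b < 1"
  shows "qpoch_inf a b \<noteq> 0"
proof (rule qp_nz[OF assms(2)])
  fix j
  have "norm b ^ j \<le> 1" using assms(2) by (simp add: power_le_one)
  hence "norm a * norm b ^ j \<le> norm a * 1" by (intro mult_left_mono) auto
  hence "norm (a * b ^ j) < 1" using assms(1) by (simp add: norm_mult norm_power)
  thus "a * b ^ j \<noteq> 1" by auto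
qed

lemma phi_prod:
  fixes q :: complex
  assumes q: "q \<noteq> 0" "norm q < 1"
  shows "ram_phi (q^2) = qpoch_inf (q^4) (q^4) * qpoch_inf (-(q^2)) (q^4) ^ 2"
proof -
  have n4: "norm (q^4) < 1" "q^4 \<noteq> 0" and n2: "q^2 \<noteq> 0" using q by (auto simp: norm_power power_less_one_iff)
  note J = jtp[OF n4 n2]
  have arg: "- (q^4) / q^2 = - (q^2)" using q by (simp add: field_simps)
  have t1: "(q^2) ^ m * (q^4) ^ tri m = (q^2) ^ nat ((int m)^2)" for m
  proof -
    have "2*m + 4 * tri m = 2 * (m*m)" using tri2[of m] by simp
    hence "(q^2) ^ m * (q^4) ^ tri m = q ^ (2 * (m*m))"
      by (simp only: power_mult[symmetric] power_add[symmetric]; simp)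
    moreover have "nat ((int m)^2) = m*m" by (simp add: power2_eq_square nat_mult_distrib)
    ultimately show ?thesis by (simp add: power_mult)
  qed
  have t2: "inverse (q^2) ^ Suc m * (q^4) ^ tri (Suc (Suc m)) = (q^2) ^ nat ((- int m - 1)^2)" for m
  proof -
    have "4 * tri (Suc (Suc m)) = 2 * (Suc m * Suc m) + 2 * Suc m"
      using tri2[of "Suc (Suc m)"] by (simp add: algebra_simps)
    hence "(q^4) ^ tri (Suc (Suc m)) = q ^ (2 * (Suc m * Suc m)) * (q^2) ^ Suc m"
      by (simp only: power_mult[symmetric] power_add[symmetric]; simp)
    moreover have "nat ((- int m - 1)^2) = Suc m * Suc m"
    proof -
      have "(- int m - 1)^2 = int (Suc m * Suc m)" by (simp add: power2_eq_square algebra_simps)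
      thus ?thesis by (metis nat_int)
    qed
    ultimately show ?thesis
    proof -
      assume H: "(q^4) ^ tri (Suc (Suc m)) = q ^ (2 * (Suc m * Suc m)) * (q^2) ^ Suc m"
         and N: "nat ((- int m - 1)^2) = Suc m * Suc m"
      have c: "inverse (q^2) ^ Suc m * (q^2) ^ Suc m = 1" using q by (simp add: power_inverse del: power_Suc)
      have "inverse (q^2) ^ Suc m * (q^4) ^ tri (Suc (Suc m)) = q ^ (2 * (Suc m * Suc m)) * (inverse (q^2) ^ Suc m * (q^2) ^ Suc m)"
        unfolding H by (simp only: mult_ac)
      also have "\<dots> = (q^2) ^ (Suc m * Suc m)" unfolding c mult_1_right by (rule power_mult)
      finally show ?thesis unfolding N .
    qed
  qed
  define g where "g j = (q^2) ^ nat (j^2)" for j :: int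
  have gb: "norm (g j) \<le> norm q ^ nat \<bar>j\<bar>" for j
  proof -
    have "nat \<bar>j\<bar> \<le> 2 * nat (j^2)"
    proof -
      have "\<bar>j\<bar> \<le> j^2"
      proof (cases "j = 0")
        case False hence "1 \<le> \<bar>j\<bar>" by simp
        hence "\<bar>j\<bar> * 1 \<le> \<bar>j\<bar> * \<bar>j\<bar>" by (intro mult_left_mono) auto
        thus ?thesis by (simp add: power2_eq_square abs_mult_self_eq)
      qed simp
      thus ?thesis by linarith
    qed
    hence "norm q ^ (2 * nat (j^2)) \<le> norm q ^ nat \<bar>j\<bar>"
      using q by (intro power_decreasing) auto
    thus ?thesis by (simp add: g_def norm_power power_mult)
  qed
  have s1: "summable (\<lambda>m. norm (g (int m)))"
  proof (rule summable_comparison_test[of _ "\<lambda>m. norm q ^ m"])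
    show "\<exists>N. \<forall>n\<ge>N. norm (norm (g (int n))) \<le> norm q ^ n"
    proof (intro exI allI impI)
      fix n :: nat
      show "norm (norm (g (int n))) \<le> norm q ^ n" using gb[of "int n"] by simp
    qed
  qed (use q in auto)
  have s2: "summable (\<lambda>m. norm (g (- int m - 1)))"
  proof (rule summable_comparison_test[of _ "\<lambda>m. norm q ^ m"])
    show "\<exists>N. \<forall>n\<ge>N. norm (norm (g (- int n - 1))) \<le> norm q ^ n"
    proof (intro exI allI impI)
      fix n :: nat
      have "norm (g (- int n - 1)) \<le> norm q ^ nat \<bar>- int n - 1\<bar>" by (rule gb)
      also have "\<dots> \<le> norm q ^ n" using q by (intro power_decreasing) auto
      finally show "norm (norm (g (- int n - 1))) \<le> norm q ^ n" by simp
    qed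
  qed (use q in auto)
  have "ram_phi (q^2) = (\<Sum>m. g (int m) + g (- int m - 1))"
    unfolding ram_phi_def g_def[symmetric] by (rule infsum_int_split[OF s1 s2])
  also have "\<dots> = qpoch_inf (q^4) (q^4) * qpoch_inf (-(q^2)) (q^4) * qpoch_inf (-(q^4)/q^2) (q^4)"
    using J unfolding t1 t2 g_def by (simp add: sums_iff)
  finally show ?thesis unfolding arg by (simp add: power2_eq_square mult.assoc)
qed

lemma psi_prod:
  fixes P :: complex
  assumes q: "P \<noteq> 0" "norm P < 1"
  shows "ram_psi P = qpoch_inf P P * qpoch_inf (-P) P ^ 2"
proof -
  note J = jtp[OF q(2) q(1) q(1)]
  have e: "P ^ m * P ^ tri m + inverse P ^ Suc m * P ^ tri (Suc (Suc m)) = 2 * P ^ (m * (m+1) div 2)" for m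
  proof -
    have d: "m * (m+1) div 2 = tri (Suc m)"
      using tri2[of "Suc m"] by (simp add: algebra_simps)
    show ?thesis unfolding d using q by (simp add: power_add field_simps power_inverse)
  qed
  have "(\<lambda>m. 2 * P ^ (m * (m+1) div 2)) sums (qpoch_inf P P * qpoch_inf (-P) P * qpoch_inf (-P/P) P)"
    using J unfolding e .
  hence "(\<lambda>m. P ^ (m * (m+1) div 2)) sums (qpoch_inf P P * qpoch_inf (-P) P * qpoch_inf (-P/P) P / 2)"
    by (drule_tac sums_divide[where c=2]) simp
  moreover have "qpoch_inf (-P/P) P = 2 * qpoch_inf (-P) P"
    using q qp_head[OF q(2), of "-1"] by simp
  ultimately have "(\<lambda>m. P ^ (m * (m+1) div 2)) sums (qpoch_inf P P * qpoch_inf (-P) P ^ 2)"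
    by (simp add: power2_eq_square mult_ac)
  thus ?thesis unfolding ram_psi_def by (simp add: sums_iff)
qed

lemma lhs_summable:
  fixes q :: complex
  assumes q: "norm q < 1" and a: "\<And>k. a k \<ge> k" and b: "\<And>k. b k \<ge> k"
  shows "summable (\<lambda>k. (q ^ a k + q ^ b k) / (1 - q ^ (8*(2*k+1))))"
proof (rule summable_comparison_test[of _ "\<lambda>k. 2 / (1 - norm q) * norm q ^ k"])
  show "summable (\<lambda>k. 2 / (1 - norm q) * norm q ^ k)"
    using q by (intro summable_mult summable_geometric) auto
  show "\<exists>N. \<forall>k\<ge>N. norm ((q ^ a k + q ^ b k) / (1 - q ^ (8*(2*k+1)))) \<le> 2 / (1 - norm q) * norm q ^ k"
  proof (intro exI allI impI)
    fix k :: nat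
    have n1: "norm (q ^ a k + q ^ b k) \<le> 2 * norm q ^ k"
    proof -
      have "norm (q ^ a k + q ^ b k) \<le> norm q ^ a k + norm q ^ b k"
        using norm_triangle_ineq[of "q ^ a k" "q ^ b k"] by (simp add: norm_power)
      also have "\<dots> \<le> norm q ^ k + norm q ^ k"
        using q a b by (intro add_mono power_decreasing) auto
      finally show ?thesis by simp
    qed
    have n2: "norm (1 - q ^ (8*(2*k+1))) \<ge> 1 - norm q"
    proof -
      have "norm q ^ (8*(2*k+1)) \<le> norm q ^ 1" using q by (intro power_decreasing) auto
      moreover have "1 - norm (q ^ (8*(2*k+1))) \<le> norm (1 - q ^ (8*(2*k+1)))"
        using norm_triangle_ineq2[of 1 "q ^ (8*(2*k+1))"] by simp
      ultimately show ?thesis by (simp add: norm_power)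
    qed
    have "norm ((q ^ a k + q ^ b k) / (1 - q ^ (8*(2*k+1)))) = norm (q ^ a k + q ^ b k) / norm (1 - q ^ (8*(2*k+1)))"
      by (simp add: norm_divide)
    also have "\<dots> \<le> (2 * norm q ^ k) / (1 - norm q)"
      using n1 n2 q by (intro frac_le) auto
    finally show "norm ((q ^ a k + q ^ b k) / (1 - q ^ (8*(2*k+1)))) \<le> 2 / (1 - norm q) * norm q ^ k" by simp
  qed
qed

lemma pw: "q ^ (c * (2*k+1)) = q ^ c * (q ^ k) ^ (2*c)" for q :: complex
proof -
  have "c * (2*k+1) = c + k * (2*c)" by simp
  thus ?thesis by (simp only: power_add power_mult)
qed

lemma term_identity:
  fixes q :: complex
  assumes q: "q \<noteq> 0" "norm q < 1"
  shows "(q ^ (2*k+1) + q ^ (3*(2*k+1))) / (1 - q ^ (8*(2*k+1)))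
       - (q ^ (5*(2*k+1)) + q ^ (7*(2*k+1))) / (1 - q ^ (8*(2*k+1)))
       = q * ((q^2)^k / (1 - (-(q^4)) * (q^8)^k) + inverse (q^2) ^ Suc k / (1 - (-(q^4)) / (q^8 * (q^8)^k)))"
proof -
  define a where "a = q ^ k"
  have a0: "a \<noteq> 0" unfolding a_def using q by simp
  have na: "norm a \<le> 1" unfolding a_def using q by (simp add: norm_power power_le_one)
  have e1: "q ^ (2*k+1) = q * a^2" unfolding a_def by (simp add: power_add power_mult mult_ac)
  have e3: "q ^ (3*(2*k+1)) = q^3 * a^6" unfolding a_def pw by simp
  have e5: "q ^ (5*(2*k+1)) = q^5 * a^10" unfolding a_def pw by simp
  have e7: "q ^ (7*(2*k+1)) = q^7 * a^14" unfolding a_def pw by simp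
  have e8: "q ^ (8*(2*k+1)) = q^8 * a^16" unfolding a_def pw by simp
  have f1: "(q^2)^k = a^2" "(q^8)^k = a^8" "inverse (q^2) ^ Suc k = inverse (q^2 * a^2)"
    unfolding a_def by (simp_all add: power_mult[symmetric] mult.commute power_inverse)
  have nz1: "1 + q^4 * a^8 \<noteq> 0"
  proof
    assume "1 + q^4 * a^8 = 0"
    hence "q^4 * a^8 = -1" by (simp add: add_eq_0_iff)
    hence "norm q ^ 4 * norm a ^ 8 = 1" by (metis norm_minus_cancel norm_mult norm_one norm_power)
    moreover have "norm q ^ 4 * norm a ^ 8 < 1"
    proof -
      have "norm a ^ 8 \<le> 1" using na by (simp add: power_le_one)
      moreover have "norm q ^ 4 < 1" using q by (simp add: power_less_one_iff)
      ultimately show ?thesis by (metis mult_le_one mult_left_le norm_ge_zero not_le order_le_less_trans zero_le_power)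
    qed
    ultimately show False by simp
  qed
  have nz2: "1 - q^4 * a^8 \<noteq> 0"
  proof
    assume "1 - q^4 * a^8 = 0"
    hence "q^4 * a^8 = 1" by simp
    hence "norm q ^ 4 * norm a ^ 8 = 1" by (metis norm_mult norm_one norm_power)
    moreover have "norm q ^ 4 * norm a ^ 8 < 1"
    proof -
      have "norm a ^ 8 \<le> 1" using na by (simp add: power_le_one)
      moreover have "norm q ^ 4 < 1" using q by (simp add: power_less_one_iff)
      ultimately show ?thesis by (metis mult_le_one mult_left_le norm_ge_zero not_le order_le_less_trans zero_le_power)
    qed
    ultimately show False by simp
  qed
  have den: "1 - q^8 * a^16 = (1 - q^4 * a^8) * (1 + q^4 * a^8)" by algebra
  have num: "q * a^2 + q^3 * a^6 - (q^5 * a^10 + q^7 * a^14) = q * (a^2 + q^2 * a^6) * (1 - q^4 * a^8)" by algebra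
  have L: "(q * a^2 + q^3 * a^6) / (1 - q^8 * a^16) - (q^5 * a^10 + q^7 * a^14) / (1 - q^8 * a^16)
        = q * (a^2 + q^2 * a^6) / (1 + q^4 * a^8)"
    unfolding diff_divide_distrib[symmetric] num den using nz2 by simp
  have r1: "1 - (-(q^4)) / (q^8 * a^8) = (1 + q^4 * a^8) / (q^4 * a^8)"
    using q a0 by (simp add: field_simps)
  have r2: "inverse (q^2 * a^2) / ((1 + q^4 * a^8) / (q^4 * a^8)) = q^2 * a^6 / (1 + q^4 * a^8)"
  proof -
    have "inverse (q^2 * a^2) / ((1 + q^4 * a^8) / (q^4 * a^8)) = (q^4 * a^8) / ((1 + q^4 * a^8) * (q^2 * a^2))"
      by (simp add: divide_inverse inverse_mult_distrib mult_ac)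
    also have "\<dots> = (q^2 * a^6) * (q^2 * a^2) / ((1 + q^4 * a^8) * (q^2 * a^2))"
    proof -
      have h2: "q^4 * a^8 = (q^2 * a^6) * (q^2 * a^2)" by algebra
      show ?thesis by (simp only: h2)
    qed
    also have "(q^2 * a^6) * (q^2 * a^2) / ((1 + q^4 * a^8) * (q^2 * a^2)) = q^2 * a^6 / (1 + q^4 * a^8)"
      using q a0 by (intro mult_divide_mult_cancel_right) auto
    finally show ?thesis .
  qed
  have R: "q * (a^2 / (1 - (-(q^4)) * a^8) + inverse (q^2 * a^2) / (1 - (-(q^4)) / (q^8 * a^8)))
        = q * (a^2 + q^2 * a^6) / (1 + q^4 * a^8)"
  proof -
    have "1 - (-(q^4)) * a^8 = 1 + q^4 * a^8" by simp
    thus ?thesis unfolding r1 r2 by (simp only: add_divide_distrib[symmetric] times_divide_eq_right)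
  qed
  show ?thesis unfolding e1 e3 e5 e7 e8 f1 L R ..
qed

lemma final_alg:
  fixes q A1 A2 B1 B2 C1 C2 D E E2 E3 F G H J :: complex
  assumes nz: "q \<noteq> 0" "A1 \<noteq> 0" "C1 \<noteq> 0" "C2 \<noteq> 0" "D \<noteq> 0" "B1 \<noteq> 0" "B2 \<noteq> 0"
    and i1: "A1 * G = A2" and i2: "E * A1 = H" and i3: "B2 * B1 = J" and i4: "C1 * B2 = E2"
    and i5: "C2 * B1 = E3" and i6: "E2 * E3 = E" and i7: "E * D = F" and i8: "F * A2 = A1"
  shows "q * (A1^2 * (B1 * B2) / ((C1 * C2) * (D * D))) = q^2 * A2^4 / A1^2 * (H * J^2 / (q * (A1 * G^2)))"
proof -
  have Ee: "E = C1 * C2 * B1 * B2" using i4 i5 i6 by (auto simp: mult_ac)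
  have h: "A1 = (E * D) * (A1 * G)" by (simp only: i1 i7 i8)
  have "A1 * 1 = A1 * (E * D * G)" using h by algebra
  hence "E * D * G = 1" using nz(2) by (metis mult_left_cancel)
  hence Ge: "G = 1 / (C1 * C2 * B1 * B2 * D)" unfolding Ee using nz by (simp add: field_simps)
  show ?thesis
    unfolding i1[symmetric] i2[symmetric] i3[symmetric] Ge Ee using nz
    apply (simp add: field_simps)
    apply algebra
    done
qed

theorem mainTheorem2:
  fixes \<tau> :: complex
  assumes "Im \<tau> > 0"
  defines "q \<equiv> nome \<tau>"
  shows "(\<Sum>k::nat. (q ^ (2*k+1) + q ^ (3*(2*k+1))) / (1 - q ^ (8*(2*k+1))))
       - (\<Sum>k::nat. (q ^ (5*(2*k+1)) + q ^ (7*(2*k+1))) / (1 - q ^ (8*(2*k+1))))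
       = dedekind_eta (16 * \<tau>) ^ 4 / dedekind_eta (8 * \<tau>) ^ 2
         * (ram_phi (q ^ 2) / (q * ram_psi (q ^ 8)))"
proof -
  have q0: "q \<noteq> 0" unfolding q_def nome_def by simp
  have nq: "norm q < 1" unfolding q_def nome_def using assms(1) by (simp add: norm_exp_eq_Re)
  have nqp: "0 < norm q" using q0 by simp
  have np: "norm (q ^ k) < 1" if "k > 0" for k using nq that by (simp add: norm_power power_less_one_iff)
  have pz: "q ^ k \<noteq> 0" for k using q0 by simp
  have nz: "qpoch_inf (q ^ a) (q ^ b) \<noteq> 0" "qpoch_inf (- (q ^ a)) (q ^ b) \<noteq> 0" if "a > 0" "b > 0" for a b
    using qp_nz2[OF np[OF that(1)] np[OF that(2)]] qp_nz2[of "- (q^a)" "q^b"] np[OF that(1)] np[OF that(2)] by auto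
  have pinj: "norm q ^ a = norm q ^ b \<Longrightarrow> a = b" for a b
    using nqp nq by (metis linorder_neqE_nat power_strict_decreasing_iff order_less_irrefl)
  define S where "S k = (q^2)^k / (1 - (-(q^4)) * (q^8)^k) + inverse (q^2) ^ Suc k / (1 - (-(q^4)) / (q^8 * (q^8)^k))" for k
  have KR: "S sums (qpoch_inf (q^8) (q^8) ^ 2 * (qpoch_inf (q^2 * -(q^4)) (q^8) * qpoch_inf (q^8/(q^2 * -(q^4))) (q^8)) /
        ((qpoch_inf (q^2) (q^8) * qpoch_inf (q^8/q^2) (q^8)) * (qpoch_inf (-(q^4)) (q^8) * qpoch_inf (q^8/(-(q^4))) (q^8))))"
    unfolding S_def
  proof (rule kron)
    show "q^8 \<noteq> 0" "-(q^4) \<noteq> 0" using q0 by auto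
    show "norm (q^8) < norm (q^2)" using nqp nq by (simp add: norm_power)
    show "norm (q^2) < 1" by (rule np) simp
    show "-(q^4) * (q^8)^m \<noteq> 1" for m
    proof
      assume h: "-(q^4) * (q^8)^m = 1"
      have e: "q^4 * (q^8)^m = q ^ (4 + 8*m)" by (simp add: power_add power_mult)
      have "q ^ (4 + 8*m) = -1" using h unfolding e[symmetric] by (simp add: minus_equation_iff)
      hence "norm (q ^ (4 + 8*m)) = 1" by simp
      thus False using np[of "4 + 8*m"] by simp
    qed
    show "q^8 * (q^8)^m \<noteq> -(q^4)" for m
    proof
      assume h: "q^8 * (q^8)^m = -(q^4)"
      have e: "q^8 * (q^8)^m = q ^ (8 + 8*m)" by (simp add: power_add power_mult)
      have "norm (q ^ (8 + 8*m)) = norm (q^4)" using h unfolding e by simp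
      hence "norm q ^ (8 + 8*m) = norm q ^ 4" by (simp add: norm_power)
      hence "8 + 8*m = 4" by (rule pinj)
      thus False by simp
    qed
  qed
  have g1: "q^2 * -(q^4) = -(q^6)" by (simp add: power_add[symmetric])
  have g2: "q^8/(q^2 * -(q^4)) = -(q^2)" using q0 by (simp add: field_simps power_add[symmetric])
  have g2': "q^8/(-(q^6)) = -(q^2)" using q0 by (simp add: field_simps power_add[symmetric])
  have g3: "q^8/q^2 = q^6" using q0 by (simp add: field_simps power_add[symmetric])
  have g4: "q^8/(-(q^4)) = -(q^4)" using q0 by (simp add: field_simps power_add[symmetric])
  define KV where "KV = qpoch_inf (q^8) (q^8) ^ 2 * (qpoch_inf (-(q^6)) (q^8) * qpoch_inf (-(q^2)) (q^8)) /
        ((qpoch_inf (q^2) (q^8) * qpoch_inf (q^6) (q^8)) * (qpoch_inf (-(q^4)) (q^8) * qpoch_inf (-(q^4)) (q^8)))"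
  have KR': "S sums KV" using KR unfolding g2 g1 g2' g3 g4 KV_def .
  have sf1: "summable (\<lambda>k. (q ^ (2*k+1) + q ^ (3*(2*k+1))) / (1 - q ^ (8*(2*k+1))))"
    by (rule lhs_summable[OF nq]) auto
  have sf2: "summable (\<lambda>k. (q ^ (5*(2*k+1)) + q ^ (7*(2*k+1))) / (1 - q ^ (8*(2*k+1))))"
    by (rule lhs_summable[OF nq]) auto
  have "(\<Sum>k::nat. (q ^ (2*k+1) + q ^ (3*(2*k+1))) / (1 - q ^ (8*(2*k+1))))
       - (\<Sum>k::nat. (q ^ (5*(2*k+1)) + q ^ (7*(2*k+1))) / (1 - q ^ (8*(2*k+1))))
      = (\<Sum>k. (q ^ (2*k+1) + q ^ (3*(2*k+1))) / (1 - q ^ (8*(2*k+1))) - (q ^ (5*(2*k+1)) + q ^ (7*(2*k+1))) / (1 - q ^ (8*(2*k+1))))"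
    using sf1 sf2 by (rule suminf_diff)
  also have "\<dots> = (\<Sum>k. q * S k)"
    unfolding S_def term_identity[OF q0 nq] ..
  also have "\<dots> = q * KV" using sums_mult[OF KR', of q] by (simp add: sums_iff)
  finally have LHS: "(\<Sum>k::nat. (q ^ (2*k+1) + q ^ (3*(2*k+1))) / (1 - q ^ (8*(2*k+1))))
       - (\<Sum>k::nat. (q ^ (5*(2*k+1)) + q ^ (7*(2*k+1))) / (1 - q ^ (8*(2*k+1)))) = q * KV" .
  define w where "w = exp (2 * pi * \<i> * \<tau> / 3)"
  have e8: "exp (2 * pi * \<i> * (8 * \<tau>) / 24) = w" unfolding w_def by (simp add: field_simps)
  have e16: "exp (2 * pi * \<i> * (16 * \<tau>) / 24) = w ^ 2"
  proof -
    have "2 * pi * \<i> * (16 * \<tau>) / 24 = of_nat 2 * (2 * pi * \<i> * \<tau> / 3)" by (simp add: field_simps)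
    thus ?thesis unfolding w_def by (simp only: exp_of_nat_mult)
  qed
  have eq: "q = w ^ 3"
  proof -
    have h: "2 * pi * \<i> * \<tau> = of_nat 3 * (2 * pi * \<i> * \<tau> / 3)" by (simp add: field_simps)
    have "exp (2 * pi * \<i> * \<tau>) = exp (of_nat 3 * (2 * pi * \<i> * \<tau> / 3))" using h by (rule arg_cong)
    also have "\<dots> = w ^ 3" unfolding w_def by (rule exp_of_nat_mult)
    finally show ?thesis unfolding q_def nome_def .
  qed
  have n16: "nome (16 * \<tau>) = q ^ 16"
  proof -
    have "2 * pi * \<i> * (16 * \<tau>) = of_nat 16 * (2 * pi * \<i> * \<tau>)" by (simp add: field_simps)
    thus ?thesis unfolding q_def nome_def by (simp only: exp_of_nat_mult)
  qed
  have n8: "nome (8 * \<tau>) = q ^ 8"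
  proof -
    have "2 * pi * \<i> * (8 * \<tau>) = of_nat 8 * (2 * pi * \<i> * \<tau>)" by (simp add: field_simps)
    thus ?thesis unfolding q_def nome_def by (simp only: exp_of_nat_mult)
  qed
  have w0: "w \<noteq> 0" unfolding w_def by simp
  have A1nz: "qpoch_inf (q^8) (q^8) \<noteq> 0" using nz(1)[of 8 8] by simp
  have eta: "dedekind_eta (16 * \<tau>) ^ 4 / dedekind_eta (8 * \<tau>) ^ 2
        = q^2 * qpoch_inf (q^16) (q^16) ^ 4 / qpoch_inf (q^8) (q^8) ^ 2"
  proof -
    have q2: "q^2 = w^6" unfolding eq by (simp add: power_mult[symmetric])
    have "dedekind_eta (16 * \<tau>) ^ 4 / dedekind_eta (8 * \<tau>) ^ 2
        = (w^2 * qpoch_inf (q^16) (q^16)) ^ 4 / (w * qpoch_inf (q^8) (q^8)) ^ 2"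
      unfolding dedekind_eta_def e8 e16 n16 n8 ..
    also have "\<dots> = w^6 * qpoch_inf (q^16) (q^16) ^ 4 / qpoch_inf (q^8) (q^8) ^ 2"
      using w0 A1nz by (simp add: power_mult_distrib field_simps power_mult[symmetric])
    finally show ?thesis unfolding q2 .
  qed
  have phi: "ram_phi (q^2) = qpoch_inf (q^4) (q^4) * qpoch_inf (-(q^2)) (q^4) ^ 2"
    by (rule phi_prod[OF q0 nq])
  have psi: "ram_psi (q^8) = qpoch_inf (q^8) (q^8) * qpoch_inf (-(q^8)) (q^8) ^ 2"
    by (rule psi_prod[OF pz np]) simp
  have n4: "norm (q^4) < 1" "norm (q^8) < 1" by (auto intro: np)
  have i1: "qpoch_inf (q^8) (q^8) * qpoch_inf (-(q^8)) (q^8) = qpoch_inf (q^16) (q^16)"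
    using qp_plusminus[where a="q^8" and b="q^8", OF n4(2)] by (simp add: power_mult[symmetric])
  have i2: "qpoch_inf (q^4) (q^8) * qpoch_inf (q^8) (q^8) = qpoch_inf (q^4) (q^4)"
    using qp_interleave[where a="q^4" and b="q^4", OF n4(1)] by (simp add: power_mult[symmetric] power_add[symmetric])
  have i3: "qpoch_inf (-(q^2)) (q^8) * qpoch_inf (-(q^6)) (q^8) = qpoch_inf (-(q^2)) (q^4)"
    using qp_interleave[where a="-(q^2)" and b="q^4", OF n4(1)] by (simp add: power_mult[symmetric] power_add[symmetric])
  have i4: "qpoch_inf (q^2) (q^8) * qpoch_inf (-(q^2)) (q^8) = qpoch_inf (q^4) (q^16)"
    using qp_plusminus[where a="q^2" and b="q^8", OF n4(2)] by (simp add: power_mult[symmetric])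
  have i5: "qpoch_inf (q^6) (q^8) * qpoch_inf (-(q^6)) (q^8) = qpoch_inf (q^12) (q^16)"
    using qp_plusminus[where a="q^6" and b="q^8", OF n4(2)] by (simp add: power_mult[symmetric])
  have i6: "qpoch_inf (q^4) (q^16) * qpoch_inf (q^12) (q^16) = qpoch_inf (q^4) (q^8)"
    using qp_interleave[where a="q^4" and b="q^8", OF n4(2)] by (simp add: power_mult[symmetric] power_add[symmetric])
  have i7: "qpoch_inf (q^4) (q^8) * qpoch_inf (-(q^4)) (q^8) = qpoch_inf (q^8) (q^16)"
    using qp_plusminus[where a="q^4" and b="q^8", OF n4(2)] by (simp add: power_mult[symmetric])
  have i8: "qpoch_inf (q^8) (q^16) * qpoch_inf (q^16) (q^16) = qpoch_inf (q^8) (q^8)"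
    using qp_interleave[where a="q^8" and b="q^8", OF n4(2)] by (simp add: power_mult[symmetric] power_add[symmetric])
  have FA: "q * KV = q^2 * qpoch_inf (q^16) (q^16) ^ 4 / qpoch_inf (q^8) (q^8) ^ 2 *
      (qpoch_inf (q^4) (q^4) * qpoch_inf (-(q^2)) (q^4) ^ 2 / (q * (qpoch_inf (q^8) (q^8) * qpoch_inf (-(q^8)) (q^8) ^ 2)))"
    unfolding KV_def
    by (rule final_alg[OF q0 A1nz _ _ _ _ _ i1 i2 i3 i4 i5 i6 i7 i8])
       (use nz[of 2 8] nz[of 6 8] nz[of 4 8] in auto)
  show ?thesis unfolding LHS eta phi psi FA ..
qed

end
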